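(* Let $N$ be a positive integer, $L_1\ge\cdots\ge L_K$ nonnegative integers with $L_1\le N$, and $M=\sum_i L_i$. Then $c((N^{L_1}),\ldots,(N^{L_K});(M^N))=c((N^{N-L_1}),\ldots,(N^{N-L_K});((KN-M)^N))$.
   Context: Littlewood–Richardson coefficients are defined by $\prod_i s_{\lambda^i}=\sum_\mu c(\lambda^1,\ldots,\lambda^K;\mu)s_\mu$ for Schur polynomials $s_\lambda$; $(a^b)$ denotes the rectangular partition with $b$ parts equal to $a$ (empty if $b=0$). *)

theory Defs
  imports Main "HOL-Library.Poly_Mapping"
begin

text \<open>Polynomials in variables x_0, x_1, ... with integer coefficients:
  monomials are finitely supported exponent vectors nat =>0 nat.\<close>
type_synonym ipoly = "(nat \<Rightarrow>\<^sub>0 nat) \<Rightarrow>\<^sub>0 int"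

definition var :: "nat \<Rightarrow> ipoly" where
  "var k = Poly_Mapping.single (Poly_Mapping.single k 1) 1"

definition is_partition :: "nat list \<Rightarrow> bool" where
  "is_partition lam \<longleftrightarrow> sorted_wrt (\<ge>) lam \<and> (\<forall>x\<in>set lam. 0 < x)"

definition partitions_of :: "nat \<Rightarrow> nat list set" where
  "partitions_of m = {lam. is_partition lam \<and> sum_list lam = m}"

text \<open>Cells (row i, column j) of the Young diagram, 0-indexed.\<close>
definition cells :: "nat list \<Rightarrow> (nat \<times> nat) set" where
  "cells lam = {(i, j). i < length lam \<and> j < lam ! i}"

definition SSYT :: "nat \<Rightarrow> nat list \<Rightarrow> (nat \<times> nat \<Rightarrow> nat) set" where
  "SSYT n lam = {T. (\<forall>c. c \<notin> cells lam \<longrightarrow> T c = 0)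
     \<and> (\<forall>c\<in>cells lam. T c < n)
     \<and> (\<forall>i j. (i, j) \<in> cells lam \<and> (i, Suc j) \<in> cells lam \<longrightarrow> T (i, j) \<le> T (i, Suc j))
     \<and> (\<forall>i j. (i, j) \<in> cells lam \<and> (Suc i, j) \<in> cells lam \<longrightarrow> T (i, j) < T (Suc i, j))}"

definition schur :: "nat \<Rightarrow> nat list \<Rightarrow> ipoly" where
  "schur n lam = (\<Sum>T\<in>SSYT n lam. \<Prod>c\<in>cells lam. var (T c))"

text \<open>We work with
  m = |lam^1|+...+|lam^K| variables, enough so that all Schur polynomials of
  partitions of m are linearly independent; the product is homogeneous of degree m,
  so its expansion involves only partitions of m, and the coefficient is 0 for
  mu not a partition of m.\<close>
definition LR_coeff :: "nat list list \<Rightarrow> nat list \<Rightarrow> int" where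
  "LR_coeff lams mu =
     (let m = sum_list (map sum_list lams) in
      THE c. \<exists>d :: nat list \<Rightarrow> int.
        prod_list (map (schur m) lams) = (\<Sum>nu\<in>partitions_of m. of_int (d nu) * schur m nu)
        \<and> c = (if mu \<in> partitions_of m then d mu else 0))"

definition rect :: "nat \<Rightarrow> nat \<Rightarrow> nat list" where
  "rect a b = (if a = 0 then [] else replicate b a)"

end

theory Submission
  imports Defs
begin


definition pn :: "nat list \<Rightarrow> nat \<Rightarrow> nat" where
  "pn lam i = (if i < length lam then lam!i else 0)"

lemma cells_pn: "cells lam = {(i, j). j < pn lam i}"
  by (auto simp: cells_def pn_def split: if_splits)

lemma pn_mono: "is_partition lam \<Longrightarrow> i \<le> i' \<Longrightarrow> pn lam i' \<le> pn lam i"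
  unfolding pn_def is_partition_def
  by (cases "i = i'") (auto, metis sorted_wrt_nth_less le_neq_implies_less order.strict_trans1)

lemma pn_pos: "is_partition lam \<Longrightarrow> (0 < pn lam i) = (i < length lam)"
  unfolding pn_def is_partition_def by auto

lemma cells_sub: "cells lam \<subseteq> (SIGMA i:{..<length lam}. {..<lam!i})"
  by (auto simp: cells_def)

lemma finite_cells[simp]: "finite (cells lam)"
  by (rule finite_subset[OF cells_sub]) auto

lemma card_cells: "card (cells lam) = sum_list lam"
proof -
  have "cells lam = (SIGMA i:{..<length lam}. {..<lam!i})" by (auto simp: cells_def)
  hence "card (cells lam) = (\<Sum>i<length lam. lam!i)" by (simp add: card_SigmaI)
  also have "\<dots> = sum_list lam" by (simp add: sum_list_sum_nth atLeast0LessThan)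
  finally show ?thesis .
qed

definition wt :: "nat list \<Rightarrow> (nat \<times> nat \<Rightarrow> nat) \<Rightarrow> nat \<Rightarrow>\<^sub>0 nat" where
  "wt lam T = (\<Sum>c\<in>cells lam. Poly_Mapping.single (T c) 1)"

lemma lookup_wt: "Poly_Mapping.lookup (wt lam T) x = card {c\<in>cells lam. T c = x}"
proof -
  have "Poly_Mapping.lookup (wt lam T) x = (\<Sum>c\<in>cells lam. if T c = x then 1 else 0)"
    unfolding wt_def lookup_sum by (auto simp: lookup_single when_def intro!: sum.cong)
  also have "\<dots> = card {c\<in>cells lam. T c = x}"
    by (simp add: sum.If_cases Int_def)
  finally show ?thesis .
qed

lemma prod_var: "finite A \<Longrightarrow> (\<Prod>c\<in>A. var (f c)) = Poly_Mapping.single (\<Sum>c\<in>A. Poly_Mapping.single (f c) 1) 1"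
proof (induction A rule: finite_induct)
  case empty
  then show ?case by simp
next
  case (insert x F)
  then show ?case by (simp add: var_def mult_single)
qed

lemma schur_sum: "schur n lam = (\<Sum>T\<in>SSYT n lam. Poly_Mapping.single (wt lam T) 1)"
  unfolding schur_def wt_def by (simp add: prod_var)

lemma finite_SSYT[simp]: "finite (SSYT n lam)"
proof -
  have "SSYT n lam \<subseteq> {f. \<forall>x. (x \<in> cells lam \<longrightarrow> f x \<in> {..<n}) \<and> (x \<notin> cells lam \<longrightarrow> f x = 0)}"
    by (auto simp: SSYT_def)
  thus ?thesis by (rule finite_subset) (rule finite_set_of_finite_funs, auto)
qed

lemma lookup_sum_single: "finite A \<Longrightarrow>
   Poly_Mapping.lookup (\<Sum>x\<in>A. Poly_Mapping.single (w x) (1::int)) b = int (card {x\<in>A. w x = b})"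
proof -
  assume "finite A"
  have "Poly_Mapping.lookup (\<Sum>x\<in>A. Poly_Mapping.single (w x) (1::int)) b = (\<Sum>x\<in>A. if w x = b then 1 else 0)"
    unfolding lookup_sum by (auto simp: lookup_single when_def intro!: sum.cong)
  also have "\<dots> = int (card {x\<in>A. w x = b})"
    using \<open>finite A\<close> by (simp add: sum.If_cases Int_def)
  finally show ?thesis .
qed

definition Kc :: "nat \<Rightarrow> nat list \<Rightarrow> (nat \<Rightarrow>\<^sub>0 nat) \<Rightarrow> nat" where
  "Kc n lam b = card {T\<in>SSYT n lam. wt lam T = b}"

lemma lookup_schur: "Poly_Mapping.lookup (schur n lam) b = int (Kc n lam b)"
  by (simp add: schur_sum lookup_sum_single Kc_def)

fun tup :: "nat \<Rightarrow> nat list list \<Rightarrow> (nat \<times> nat \<Rightarrow> nat) list set" where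
  "tup n [] = {[]}"
| "tup n (l#ls) = (\<lambda>(T, Ts). T # Ts) ` (SSYT n l \<times> tup n ls)"

fun tw :: "nat list list \<Rightarrow> (nat \<times> nat \<Rightarrow> nat) list \<Rightarrow> nat \<Rightarrow>\<^sub>0 nat" where
  "tw (l#ls) (T#Ts) = wt l T + tw ls Ts"
| "tw _ _ = 0"

lemma finite_tup[simp]: "finite (tup n ls)"
  by (induction ls) auto

lemma prod_tup: "prod_list (map (schur n) ls) = (\<Sum>Ts\<in>tup n ls. Poly_Mapping.single (tw ls Ts) 1)"
proof (induction ls)
  case Nil
  then show ?case by simp
next
  case (Cons l ls)
  have inj: "inj_on (\<lambda>(T, Ts). T # Ts) (SSYT n l \<times> tup n ls)"
    by (auto simp: inj_on_def)
  have "prod_list (map (schur n) (l#ls)) = schur n l * (\<Sum>Ts\<in>tup n ls. Poly_Mapping.single (tw ls Ts) 1)"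
    using Cons by simp
  also have "\<dots> = (\<Sum>T\<in>SSYT n l. \<Sum>Ts\<in>tup n ls. Poly_Mapping.single (wt l T + tw ls Ts) 1)"
    by (simp add: schur_sum sum_product mult_single)
  also have "\<dots> = (\<Sum>p\<in>SSYT n l \<times> tup n ls. Poly_Mapping.single (tw (l#ls) ((\<lambda>(T, Ts). T # Ts) p)) 1)"
    by (simp add: sum.cartesian_product split_def)
  also have "\<dots> = (\<Sum>Ts\<in>tup n (l#ls). Poly_Mapping.single (tw (l#ls) Ts) 1)"
    by (simp add: sum.reindex[OF inj])
  finally show ?case .
qed

definition Qc :: "nat \<Rightarrow> nat list list \<Rightarrow> (nat \<Rightarrow>\<^sub>0 nat) \<Rightarrow> nat" where
  "Qc n ls b = card {Ts\<in>tup n ls. tw ls Ts = b}"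

lemma lookup_prod: "Poly_Mapping.lookup (prod_list (map (schur n) ls)) b = int (Qc n ls b)"
  by (simp add: prod_tup lookup_sum_single Qc_def)

lemma lookup_ofint_mult: "Poly_Mapping.lookup (of_int c * (p::ipoly)) b = c * Poly_Mapping.lookup p b"
proof -
  have "of_int c * p = Poly_Mapping.map ((*) c) p"
    by (simp add: mult_map_scale_conv_mult flip: single_of_int)
  thus ?thesis by (simp add: Poly_Mapping.map.rep_eq when_def)
qed



definition cnt :: "nat set \<Rightarrow> nat \<Rightarrow> nat" where
  "cnt X x = card {y\<in>X. y < x}"

definition sel :: "nat set \<Rightarrow> nat \<Rightarrow> nat" where
  "sel X i = sorted_list_of_set X ! i"

lemma sel_in: "finite X \<Longrightarrow> i < card X \<Longrightarrow> sel X i \<in> X"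
  unfolding sel_def
  by (metis length_sorted_list_of_set nth_mem set_sorted_list_of_set)

lemma sel_less: "finite X \<Longrightarrow> i < j \<Longrightarrow> j < card X \<Longrightarrow> sel X i < sel X j"
  unfolding sel_def
  by (metis length_sorted_list_of_set sorted_wrt_nth_less strict_sorted_list_of_set)

lemma sel_le: "finite X \<Longrightarrow> i \<le> j \<Longrightarrow> j < card X \<Longrightarrow> sel X i \<le> sel X j"
  using sel_less[of X i j] by (cases "i = j") auto

lemma sel_surj: "finite X \<Longrightarrow> x \<in> X \<Longrightarrow> \<exists>i<card X. sel X i = x"
  unfolding sel_def
  by (metis in_set_conv_nth length_sorted_list_of_set set_sorted_list_of_set)

lemma sel_less_iff: "finite X \<Longrightarrow> i < card X \<Longrightarrow> j < card X \<Longrightarrow> sel X i < sel X j \<longleftrightarrow> i < j"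
  by (metis linorder_neq_iff order_less_asym sel_less)

lemma sel_inj: "finite X \<Longrightarrow> i < card X \<Longrightarrow> j < card X \<Longrightarrow> sel X i = sel X j \<longleftrightarrow> i = j"
  by (metis linorder_neq_iff order_less_irrefl sel_less)

lemma sel_image: "finite X \<Longrightarrow> sel X ` {..<card X} = X"
  using sel_in sel_surj by fastforce

lemma cnt_sel: assumes "finite X" "i < card X" shows "cnt X (sel X i) = i"
proof -
  have "{y\<in>X. y < sel X i} = sel X ` {..<i}"
  proof
    show "{y \<in> X. y < sel X i} \<subseteq> sel X ` {..<i}"
    proof
      fix y assume "y \<in> {y \<in> X. y < sel X i}"
      then obtain j where j: "j < card X" "sel X j = y" "y < sel X i"
        using sel_surj[OF assms(1)] by auto
      hence "j < i" using sel_less_iff[OF assms(1) j(1) assms(2)] by auto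
      thus "y \<in> sel X ` {..<i}" using j by auto
    qed
  next
    show "sel X ` {..<i} \<subseteq> {y \<in> X. y < sel X i}"
      using assms sel_in sel_less by auto
  qed
  moreover have "inj_on (sel X) {..<i}"
    using assms by (auto simp: inj_on_def sel_inj)
  ultimately show ?thesis by (simp add: cnt_def card_image)
qed

lemma sel_unique: assumes "finite X" "x \<in> X" "cnt X x = i" shows "sel X i = x"
proof -
  obtain j where j: "j < card X" "sel X j = x" using sel_surj[OF assms(1,2)] by blast
  have "cnt X x = j" using cnt_sel[OF assms(1) j(1)] j(2) by simp
  thus ?thesis using j assms(3) by simp
qed

lemma cnt_mono: "finite X \<Longrightarrow> x \<le> x' \<Longrightarrow> cnt X x \<le> cnt X x'"
  unfolding cnt_def by (rule card_mono) auto

lemma cnt_le_card: "finite X \<Longrightarrow> cnt X x \<le> card X"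
  unfolding cnt_def by (rule card_mono) auto

lemma cnt_big: "finite X \<Longrightarrow> \<forall>y\<in>X. y < x \<Longrightarrow> cnt X x = card X"
proof -
  assume "finite X" "\<forall>y\<in>X. y < x"
  hence "{y\<in>X. y < x} = X" by blast
  thus ?thesis unfolding cnt_def by (simp only:)
qed

lemma cnt_Suc_sel: assumes "finite X" "i < card X" shows "cnt X (Suc (sel X i)) = Suc i"
proof -
  have "{y\<in>X. y < Suc (sel X i)} = insert (sel X i) {y\<in>X. y < sel X i}"
    using sel_in[OF assms] by auto
  moreover have "sel X i \<notin> {y\<in>X. y < sel X i}" by simp
  moreover have "finite {y\<in>X. y < sel X i}" using assms(1) by simp
  ultimately have "cnt X (Suc (sel X i)) = Suc (cnt X (sel X i))" unfolding cnt_def by simp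
  thus ?thesis using cnt_sel[OF assms] by simp
qed

lemma sel_lt_of_cnt: assumes "finite X" "r < cnt X x" shows "sel X r < x"
proof (rule ccontr)
  assume "\<not> sel X r < x"
  have "r < card X" using assms cnt_le_card[OF assms(1), of x] by linarith
  have "x \<le> sel X r" using \<open>\<not> sel X r < x\<close> by simp
  hence "cnt X x \<le> cnt X (sel X r)" by (rule cnt_mono[OF assms(1)])
  thus False using cnt_sel[OF assms(1) \<open>r < card X\<close>] assms(2) by simp
qed

lemma dom1:
  assumes fA: "finite A" and fB: "finite B" and d: "\<forall>x. cnt B x \<le> cnt A x" and i: "i < card B"
  shows "sel A i \<le> sel B i"
proof (rule ccontr)
  assume "\<not> sel A i \<le> sel B i"
  hence le: "Suc (sel B i) \<le> sel A i" by simp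
  have "cnt B (Suc (sel B i)) \<le> cnt A (Suc (sel B i))" using d by (rule spec)
  hence c1: "Suc i \<le> cnt A (Suc (sel B i))" using cnt_Suc_sel[OF fB i] by simp
  hence "i < card A" using cnt_le_card[OF fA, of "Suc (sel B i)"] by simp
  have "cnt A (Suc (sel B i)) \<le> cnt A (sel A i)" using cnt_mono[OF fA le] .
  thus False using cnt_sel[OF fA \<open>i < card A\<close>] c1 by simp
qed

lemma dom2:
  assumes fA: "finite A" and fB: "finite B" and d: "\<forall>r<card B. sel A r \<le> sel B r"
    and c: "card B \<le> card A"
  shows "cnt B x \<le> cnt A x"
proof -
  let ?k = "cnt B x"
  have kB: "?k \<le> card B" by (rule cnt_le_card[OF fB])
  have "sel A ` {..<?k} \<subseteq> {y\<in>A. y < x}"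
  proof
    fix y assume "y \<in> sel A ` {..<?k}"
    then obtain r where r: "r < ?k" "y = sel A r" by auto
    have "sel B r < x" by (rule sel_lt_of_cnt[OF fB r(1)])
    moreover have "sel A r \<le> sel B r" using d r kB by auto
    moreover have "sel A r \<in> A" using sel_in[OF fA] r kB c by auto
    ultimately show "y \<in> {y\<in>A. y < x}" using r by auto
  qed
  moreover have "inj_on (sel A) {..<?k}"
    using kB c fA by (auto simp: inj_on_def sel_inj)
  ultimately have "card (sel A ` {..<?k}) \<le> cnt A x"
    unfolding cnt_def by (intro card_mono) auto
  thus ?thesis using \<open>inj_on (sel A) {..<?k}\<close> by (simp add: card_image)
qed

lemma cnt_diff: assumes "finite C" "A \<subseteq> C" shows "cnt (C - A) x + cnt A x = cnt C x"
proof -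
  have "{y\<in>C. y < x} = {y\<in>C - A. y < x} \<union> {y\<in>A. y < x}" using assms by auto
  moreover have "finite {y\<in>C - A. y < x}" "finite {y\<in>A. y < x}" using assms finite_subset by auto
  moreover have "{y\<in>C - A. y < x} \<inter> {y\<in>A. y < x} = {}" by auto
  ultimately show ?thesis unfolding cnt_def by (simp add: card_Un_disjoint)
qed

lemma sel_mono_image:
  assumes "\<And>i j. i < j \<Longrightarrow> j < h \<Longrightarrow> f i < f j" "i < h"
  shows "sel (f ` {..<h}) i = f i"
proof (rule sel_unique)
  show "finite (f ` {..<h})" by simp
  show "f i \<in> f ` {..<h}" using assms(2) by simp
  have "{y\<in>f ` {..<h}. y < f i} = f ` {..<i}"
  proof
    show "{y \<in> f ` {..<h}. y < f i} \<subseteq> f ` {..<i}"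
    proof
      fix y assume "y \<in> {y \<in> f ` {..<h}. y < f i}"
      then obtain j where j: "j < h" "y = f j" "f j < f i" by auto
      have "j < i"
      proof (rule ccontr)
        assume "\<not> j < i"
        hence "i < j \<or> i = j" by auto
        thus False using assms(1)[of i j] j by auto
      qed
      thus "y \<in> f ` {..<i}" using j by auto
    qed
  next
    show "f ` {..<i} \<subseteq> {y\<in>f ` {..<h}. y < f i}"
    proof
      fix y assume "y \<in> f ` {..<i}"
      then obtain j where j: "j < i" "y = f j" by auto
      have "f j < f i" using assms(1)[OF j(1) assms(2)] .
      moreover have "j < h" using j(1) assms(2) by simp
      ultimately show "y \<in> {y\<in>f ` {..<h}. y < f i}" using j(2) by simp
    qed
  qed
  moreover have "inj_on f {..<i}"
  proof (rule inj_onI)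
    fix x y assume "x \<in> {..<i}" "y \<in> {..<i}" "f x = f y"
    have "x < h" "y < h" using \<open>x \<in> _\<close> \<open>y \<in> _\<close> assms(2) by auto
    thus "x = y" using assms(1)[of x y] assms(1)[of y x] \<open>f x = f y\<close>
      by (cases x y rule: linorder_cases) auto
  qed
  ultimately show "cnt (f ` {..<h}) (f i) = i" unfolding cnt_def
    by (metis card_image card_lessThan)
qed

lemma SSYT_zero: "T \<in> SSYT n lam \<Longrightarrow> c \<notin> cells lam \<Longrightarrow> T c = 0"
  unfolding SSYT_def by blast

lemma SSYT_less: "T \<in> SSYT n lam \<Longrightarrow> c \<in> cells lam \<Longrightarrow> T c < n"
  unfolding SSYT_def by blast

lemma SSYT_row: "T \<in> SSYT n lam \<Longrightarrow> (i, j) \<in> cells lam \<Longrightarrow> (i, Suc j) \<in> cells lam \<Longrightarrow> T (i, j) \<le> T (i, Suc j)"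
  unfolding SSYT_def by blast

lemma SSYT_col: "T \<in> SSYT n lam \<Longrightarrow> (i, j) \<in> cells lam \<Longrightarrow> (Suc i, j) \<in> cells lam \<Longrightarrow> T (i, j) < T (Suc i, j)"
  unfolding SSYT_def by blast

lemma cells_down: "is_partition lam \<Longrightarrow> (i, j) \<in> cells lam \<Longrightarrow> i' \<le> i \<Longrightarrow> j' \<le> j \<Longrightarrow> (i', j') \<in> cells lam"
  unfolding cells_pn using pn_mono[of lam i' i] by auto

lemma row_weak:
  assumes T: "T \<in> SSYT n lam" and p: "is_partition lam"
  shows "(i, j') \<in> cells lam \<Longrightarrow> j \<le> j' \<Longrightarrow> T (i, j) \<le> T (i, j')"
proof (induction j' arbitrary: j)
  case 0
  then show ?case by simp
next
  case (Suc j')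
  show ?case
  proof (cases "j = Suc j'")
    case False
    hence "j \<le> j'" using Suc by simp
    have c: "(i, j') \<in> cells lam" using cells_down[OF p Suc.prems(1)] by simp
    have "T (i, j) \<le> T (i, j')" using Suc.IH[OF c \<open>j \<le> j'\<close>] .
    also have "\<dots> \<le> T (i, Suc j')" using SSYT_row[OF T c Suc.prems(1)] .
    finally show ?thesis .
  qed simp
qed

lemma col_strict:
  assumes T: "T \<in> SSYT n lam" and p: "is_partition lam"
  shows "(i', j) \<in> cells lam \<Longrightarrow> i < i' \<Longrightarrow> T (i, j) < T (i', j)"
proof (induction i' arbitrary: i)
  case 0
  then show ?case by simp
next
  case (Suc i')
  have c: "(i', j) \<in> cells lam" using cells_down[OF p Suc.prems(1)] by simp
  have s: "T (i', j) < T (Suc i', j)" using SSYT_col[OF T c Suc.prems(1)] .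
  show ?case
  proof (cases "i = i'")
    case False
    hence "i < i'" using Suc by simp
    thus ?thesis using Suc.IH[OF c, of i] s by simp
  qed (use s in simp)
qed

definition colh :: "nat list \<Rightarrow> nat \<Rightarrow> nat" where
  "colh lam j = card {i. j < pn lam i}"

lemma col_set: "is_partition lam \<Longrightarrow> {i. j < pn lam i} = {..<colh lam j}"
proof -
  assume p: "is_partition lam"
  have fin: "finite {i. j < pn lam i}"
    by (rule finite_subset[of _ "{..<length lam}"]) (auto simp: pn_def split: if_splits)
  have down: "j < pn lam i'" if "i' \<le> i" "j < pn lam i" for i i'
    using pn_mono[OF p, of i' i] that by linarith
  show ?thesis
  proof (cases "{i. j < pn lam i} = {}")
    case True
    then show ?thesis by (simp add: colh_def)
  next
    case False
    define m where "m = Max {i. j < pn lam i}"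
    have mm: "m \<in> {i. j < pn lam i}" using Max_in[OF fin False] m_def by simp
    have "{i. j < pn lam i} = {..m}"
    proof
      show "{i. j < pn lam i} \<subseteq> {..m}" using Max_ge[OF fin] m_def by auto
      show "{..m} \<subseteq> {i. j < pn lam i}" using down mm by auto
    qed
    thus ?thesis by (simp add: colh_def lessThan_Suc_atMost)
  qed
qed

lemma cells_colh: "is_partition lam \<Longrightarrow> (i, j) \<in> cells lam \<longleftrightarrow> i < colh lam j"
  using col_set[of lam j] unfolding cells_pn by auto

lemma colh_anti: "is_partition lam \<Longrightarrow> j \<le> j' \<Longrightarrow> colh lam j' \<le> colh lam j"
proof -
  assume p: "is_partition lam" and jj: "j \<le> j'"
  have "{i. j' < pn lam i} \<subseteq> {i. j < pn lam i}" using jj by auto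
  moreover have "finite {i. j < pn lam i}" using col_set[OF p] by simp
  ultimately show ?thesis unfolding colh_def by (rule card_mono[rotated])
qed

definition colset :: "nat list \<Rightarrow> (nat \<times> nat \<Rightarrow> nat) \<Rightarrow> nat \<Rightarrow> nat set" where
  "colset lam T j = (\<lambda>i. T (i, j)) ` {..<colh lam j}"

lemma colset_props:
  assumes T: "T \<in> SSYT n lam" and p: "is_partition lam"
  shows "colset lam T j \<subseteq> {..<n}" "finite (colset lam T j)" "card (colset lam T j) = colh lam j"
    "i < colh lam j \<Longrightarrow> sel (colset lam T j) i = T (i, j)"
proof -
  show "colset lam T j \<subseteq> {..<n}"
    using SSYT_less[OF T] cells_colh[OF p] by (auto simp: colset_def)
  show "finite (colset lam T j)" by (simp add: colset_def)
  have mono: "\<And>i i'. i < i' \<Longrightarrow> i' < colh lam j \<Longrightarrow> T (i, j) < T (i', j)"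
    using col_strict[OF T p] cells_colh[OF p] by blast
  have "inj_on (\<lambda>i. T (i, j)) {..<colh lam j}"
  proof (rule inj_onI)
    fix x y assume "x \<in> {..<colh lam j}" "y \<in> {..<colh lam j}" "T (x, j) = T (y, j)"
    thus "x = y" using mono[of x y] mono[of y x]
      by (cases x y rule: linorder_cases) auto
  qed
  thus "card (colset lam T j) = colh lam j" by (simp add: colset_def card_image)
  show "i < colh lam j \<Longrightarrow> sel (colset lam T j) i = T (i, j)"
    unfolding colset_def by (rule sel_mono_image[OF mono])
qed

lemma count_by_cols:
  assumes T: "T \<in> SSYT n lam" and p: "is_partition lam"
  shows "card {c\<in>cells lam. T c = x} = card {j. x \<in> colset lam T j}"
proof -
  have "bij_betw snd {c\<in>cells lam. T c = x} {j. x \<in> colset lam T j}"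
  proof (rule bij_betwI')
    fix c d assume "c \<in> {c\<in>cells lam. T c = x}" "d \<in> {c\<in>cells lam. T c = x}"
    thus "(snd c = snd d) = (c = d)"
    proof (cases c, cases d)
      fix i j i' j' assume cd: "c = (i, j)" "d = (i', j')"
      show ?thesis
      proof
        assume "snd c = snd d"
        hence "j = j'" using cd by simp
        thus "c = d" using \<open>c \<in> _\<close> \<open>d \<in> _\<close> cd col_strict[OF T p, of i' j i] col_strict[OF T p, of i j i']
          by (cases i i' rule: linorder_cases) auto
      qed simp
    qed
  next
    fix c assume "c \<in> {c\<in>cells lam. T c = x}"
    thus "snd c \<in> {j. x \<in> colset lam T j}"
      using cells_colh[OF p] by (cases c) (auto simp: colset_def)
  next
    fix j assume "j \<in> {j. x \<in> colset lam T j}"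
    then obtain i where "i < colh lam j" "T (i, j) = x" by (auto simp: colset_def)
    thus "\<exists>c\<in>{c\<in>cells lam. T c = x}. j = snd c"
      using cells_colh[OF p] by force
  qed
  thus ?thesis by (rule bij_betw_same_card)
qed



lemma flip_card: "card {i. i < (N::nat) \<and> P (N - 1 - i)} = card {r. r < N \<and> P r}"
proof (rule bij_betw_same_card[of "\<lambda>i. N - 1 - i"])
  show "bij_betw (\<lambda>i. N - 1 - i) {i. i < N \<and> P (N - 1 - i)} {r. r < N \<and> P r}"
  proof (rule bij_betwI')
    fix x y assume "x \<in> {i. i < N \<and> P (N - 1 - i)}" "y \<in> {i. i < N \<and> P (N - 1 - i)}"
    hence "x < N" "y < N" by auto
    thus "(N - 1 - x = N - 1 - y) = (x = y)" by arith
  next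
    fix x assume "x \<in> {i. i < N \<and> P (N - 1 - i)}"
    thus "N - 1 - x \<in> {r. r < N \<and> P r}" by auto
  next
    fix y assume y: "y \<in> {r. r < N \<and> P r}"
    hence "N - 1 - y \<in> {i. i < N \<and> P (N - 1 - i)} \<and> y = N - 1 - (N - 1 - y)" by auto
    thus "\<exists>x\<in>{i. i < N \<and> P (N - 1 - i)}. y = N - 1 - x" by blast
  qed
qed

lemma card_split: "card {j. j < (a::nat) \<and> P j} + card {j. j < a \<and> \<not> P j} = a"
proof -
  have "{j. j < a \<and> P j} \<union> {j. j < a \<and> \<not> P j} = {..<a}" by auto
  moreover have "{j. j < a \<and> P j} \<inter> {j. j < a \<and> \<not> P j} = {}" by auto
  moreover have "finite {j. j < a \<and> P j}" "finite {j. j < a \<and> \<not> P j}" by auto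
  ultimately show ?thesis using card_Un_disjoint[of "{j. j < a \<and> P j}" "{j. j < a \<and> \<not> P j}"] by simp
qed

definition cpf :: "nat \<Rightarrow> nat \<Rightarrow> nat list \<Rightarrow> nat list \<Rightarrow> (nat \<times> nat \<Rightarrow> nat) \<Rightarrow> (nat \<times> nat \<Rightarrow> nat)" where
  "cpf N a nu ka T = (\<lambda>(i, j). if (i, j) \<in> cells ka then sel ({..<N} - colset nu T (a - 1 - j)) i else 0)"

definition aN :: "nat \<Rightarrow> nat \<Rightarrow> nat \<Rightarrow>\<^sub>0 nat" where
  "aN N a = (\<Sum>x<N. Poly_Mapping.single x a)"

lemma lookup_aN: "Poly_Mapping.lookup (aN N a) x = (if x < N then a else 0)"
  unfolding aN_def lookup_sum by (simp add: lookup_single when_def)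

lemma aN_add: "aN N (a + b) = aN N a + aN N b"
  by (rule poly_mapping_eqI) (simp add: lookup_aN lookup_add)

lemma aN_0: "aN N 0 = 0"
  by (rule poly_mapping_eqI) (simp add: lookup_aN)

locale cpl =
  fixes N a :: nat and nu ka :: "nat list"
  assumes pnu: "is_partition nu" and pka: "is_partition ka"
    and lnu: "length nu \<le> N" and anu: "pn nu 0 \<le> a"
    and rel: "\<And>i. pn ka i = (if i < N then a - pn nu (N - 1 - i) else 0)"
begin

lemma pn_nu_le: "pn nu i \<le> a"
  using pn_mono[OF pnu, of 0 i] anu by simp

lemma pn_nu_zero: "N \<le> i \<Longrightarrow> pn nu i = 0"
  using lnu unfolding pn_def by simp

lemma pn_ka_le: "pn ka i \<le> a"
  using rel[of i] by simp

lemma length_ka: "length ka \<le> N"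
proof (rule ccontr)
  assume "\<not> length ka \<le> N"
  hence "0 < pn ka N" using pn_pos[OF pka, of N] by simp
  thus False using rel[of N] by simp
qed

lemma sym: "cpl N a ka nu"
proof
  show "is_partition ka" by (rule pka)
  show "is_partition nu" by (rule pnu)
  show "length ka \<le> N" by (rule length_ka)
  show "pn ka 0 \<le> a" by (rule pn_ka_le)
  fix i
  show "pn nu i = (if i < N then a - pn ka (N - 1 - i) else 0)"
  proof (cases "i < N")
    case True
    have "pn ka (N - 1 - i) = a - pn nu i" using rel[of "N - 1 - i"] True by simp
    then show ?thesis using True pn_nu_le[of i] by simp
  next
    case False
    then show ?thesis using pn_nu_zero[of i] by simp
  qed
qed

lemma colh_nu_le: "colh nu j \<le> N"
proof -
  have "{i. j < pn nu i} \<subseteq> {..<N}"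
  proof
    fix i assume "i \<in> {i. j < pn nu i}"
    thus "i \<in> {..<N}" using pn_nu_zero[of i] by (cases "N \<le> i") auto
  qed
  thus ?thesis unfolding colh_def using card_mono[of "{..<N}"] by simp
qed

lemma colh_ka: assumes "j < a" shows "colh ka j = N - colh nu (a - 1 - j)"
proof -
  have iff: "j < pn ka i \<longleftrightarrow> i < N \<and> \<not> (a - 1 - j < pn nu (N - 1 - i))" for i
  proof (cases "i < N")
    case True
    have "pn ka i = a - pn nu (N - 1 - i)" using rel[of i] True by simp
    moreover have "pn nu (N - 1 - i) \<le> a" by (rule pn_nu_le)
    ultimately show ?thesis using True assms by arith
  next
    case False
    then show ?thesis using rel[of i] by simp
  qed
  have e: "a - 1 - j < pn nu r \<longleftrightarrow> r < colh nu (a - 1 - j)" for r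
    using col_set[OF pnu, of "a - 1 - j"] by (simp add: set_eq_iff)
  have s1: "{i. j < pn ka i} = {i. i < N \<and> \<not> (a - 1 - j < pn nu (N - 1 - i))}"
    using iff by blast
  have "colh ka j = card {r. r < N \<and> \<not> (a - 1 - j < pn nu r)}"
    unfolding colh_def s1 by (rule flip_card)
  also have "{r. r < N \<and> \<not> (a - 1 - j < pn nu r)} = {..<N} - {..<colh nu (a - 1 - j)}"
    unfolding e by auto
  also have "card \<dots> = N - colh nu (a - 1 - j)"
    using colh_nu_le[of "a - 1 - j"] by simp
  finally show ?thesis .
qed

lemma colh_nu_big: "a \<le> j \<Longrightarrow> colh nu j = 0"
proof -
  assume "a \<le> j"
  have "\<not> j < pn nu i" for i using pn_nu_le[of i] \<open>a \<le> j\<close> by simp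
  hence "{i. j < pn nu i} = {}" by blast
  thus ?thesis unfolding colh_def by simp
qed

lemma cells_nu_a: "(i, j) \<in> cells nu \<Longrightarrow> j < a"
  unfolding cells_pn using pn_nu_le[of i] by simp

lemma cells_ka_a: "(i, j) \<in> cells ka \<Longrightarrow> j < a"
  unfolding cells_pn using pn_ka_le[of i] by simp

context
  fixes T assumes T: "T \<in> SSYT N nu"
begin

abbreviation "S j \<equiv> colset nu T j"

lemma S_sub: "S j \<subseteq> {..<N}" using colset_props(1)[OF T pnu] .
lemma S_fin: "finite (S j)" using colset_props(2)[OF T pnu] .
lemma S_card: "card (S j) = colh nu j" using colset_props(3)[OF T pnu] .

lemma X_card: "j < a \<Longrightarrow> card ({..<N} - S (a - 1 - j)) = colh ka j"
  using colh_ka[of j] S_sub[of "a - 1 - j"] S_card[of "a - 1 - j"]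
  by (simp add: card_Diff_subset S_fin)

lemma cp_at: "(i, j) \<in> cells ka \<Longrightarrow> cpf N a nu ka T (i, j) = sel ({..<N} - S (a - 1 - j)) i"
  unfolding cpf_def by simp

lemma colset_cp: assumes "j < a" shows "colset ka (cpf N a nu ka T) j = {..<N} - S (a - 1 - j)"
proof -
  let ?X = "{..<N} - S (a - 1 - j)"
  have "colset ka (cpf N a nu ka T) j = (\<lambda>i. cpf N a nu ka T (i, j)) ` {..<colh ka j}"
    by (simp add: colset_def)
  also have "\<dots> = sel ?X ` {..<colh ka j}"
  proof (rule image_cong[OF refl])
    fix i assume "i \<in> {..<colh ka j}"
    hence "(i, j) \<in> cells ka" using cells_colh[OF pka] by simp
    thus "cpf N a nu ka T (i, j) = sel ?X i" by (rule cp_at)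
  qed
  also have "\<dots> = ?X" using sel_image[of ?X] X_card[OF assms] by simp
  finally show ?thesis .
qed

lemma colset_cp_big: assumes "a \<le> j" shows "colset ka (cpf N a nu ka T) j = {}"
proof -
  have "colh ka j = 0"
  proof -
    have "\<not> j < pn ka i" for i using pn_ka_le[of i] assms by simp
    hence "{i. j < pn ka i} = {}" by blast
    thus ?thesis unfolding colh_def by simp
  qed
  thus ?thesis by (simp add: colset_def)
qed

lemma cp_SSYT: "cpf N a nu ka T \<in> SSYT N ka"
  unfolding SSYT_def
proof (intro CollectI conjI allI impI ballI)
  let ?C = "cpf N a nu ka T"
  fix c assume "c \<notin> cells ka"
  thus "?C c = 0" unfolding cpf_def by (cases c) simp
next
  let ?C = "cpf N a nu ka T"
  fix c assume c: "c \<in> cells ka"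
  obtain i j where ij: "c = (i, j)" by (cases c)
  have ja: "j < a" using cells_ka_a c ij by simp
  have "i < card ({..<N} - S (a - 1 - j))" using X_card[OF ja] cells_colh[OF pka] c ij by simp
  hence "sel ({..<N} - S (a - 1 - j)) i \<in> {..<N} - S (a - 1 - j)"
    by (intro sel_in) auto
  thus "?C c < N" using cp_at c ij by simp
next
  let ?C = "cpf N a nu ka T"
  fix i j assume h: "(i, j) \<in> cells ka \<and> (i, Suc j) \<in> cells ka"
  have ja: "Suc j < a" using cells_ka_a[of i "Suc j"] h by simp
  define c where "c = a - 2 - j"
  have c1: "a - 1 - j = Suc c" and c2: "a - 1 - Suc j = c" using ja c_def by auto
  let ?X1 = "{..<N} - S (Suc c)" and ?X0 = "{..<N} - S c"
  have i0: "i < card ?X0" using X_card[OF ja] c2 cells_colh[OF pka] h by simp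
  have domS: "cnt (S (Suc c)) x \<le> cnt (S c) x" for x
  proof (rule dom2[OF S_fin S_fin])
    show "card (S (Suc c)) \<le> card (S c)" using S_card colh_anti[OF pnu, of c "Suc c"] by simp
    show "\<forall>r<card (S (Suc c)). sel (S c) r \<le> sel (S (Suc c)) r"
    proof (intro allI impI)
      fix r assume r: "r < card (S (Suc c))"
      hence r1: "r < colh nu (Suc c)" using S_card by simp
      hence r0: "r < colh nu c" using colh_anti[OF pnu, of c "Suc c"] by simp
      have cc1: "(r, Suc c) \<in> cells nu" using cells_colh[OF pnu] r1 by simp
      have cc0: "(r, c) \<in> cells nu" using cells_colh[OF pnu] r0 by simp
      have "T (r, c) \<le> T (r, Suc c)" by (rule SSYT_row[OF T cc0 cc1])
      thus "sel (S c) r \<le> sel (S (Suc c)) r"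
        using colset_props(4)[OF T pnu r0] colset_props(4)[OF T pnu r1] by simp
    qed
  qed
  have "\<forall>x. cnt ?X0 x \<le> cnt ?X1 x"
  proof
    fix x
    have "cnt ?X0 x + cnt (S c) x = cnt {..<N} x" by (rule cnt_diff) (auto simp: S_sub)
    moreover have "cnt ?X1 x + cnt (S (Suc c)) x = cnt {..<N} x" by (rule cnt_diff) (auto simp: S_sub)
    ultimately show "cnt ?X0 x \<le> cnt ?X1 x" using domS[of x] by linarith
  qed
  hence "sel ?X1 i \<le> sel ?X0 i" by (intro dom1) (use i0 in auto)
  thus "?C (i, j) \<le> ?C (i, Suc j)" using cp_at[of i j] cp_at[of i "Suc j"] h c1 c2 by simp
next
  let ?C = "cpf N a nu ka T"
  fix i j assume h: "(i, j) \<in> cells ka \<and> (Suc i, j) \<in> cells ka"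
  have ja: "j < a" using cells_ka_a[of i j] h by simp
  have "Suc i < card ({..<N} - S (a - 1 - j))" using X_card[OF ja] cells_colh[OF pka] h by simp
  hence "sel ({..<N} - S (a - 1 - j)) i < sel ({..<N} - S (a - 1 - j)) (Suc i)"
    by (intro sel_less) auto
  thus "?C (i, j) < ?C (Suc i, j)" using cp_at h by simp
qed

lemma cp_inv: "cpf N a ka nu (cpf N a nu ka T) = T"
proof
  fix c :: "nat \<times> nat"
  obtain i j where ij: "c = (i, j)" by (cases c)
  show "cpf N a ka nu (cpf N a nu ka T) c = T c"
  proof (cases "(i, j) \<in> cells nu")
    case True
    have ja: "j < a" using cells_nu_a True by simp
    have ja': "a - 1 - j < a" using ja by simp
    have "cpf N a ka nu (cpf N a nu ka T) (i, j) = sel ({..<N} - colset ka (cpf N a nu ka T) (a - 1 - j)) i"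
      unfolding cpf_def using True by simp
    also have "colset ka (cpf N a nu ka T) (a - 1 - j) = {..<N} - S j"
      using colset_cp[OF ja'] ja by simp
    also have "{..<N} - ({..<N} - S j) = S j" using S_sub[of j] by auto
    also have "sel (S j) i = T (i, j)"
      using colset_props(4)[OF T pnu] cells_colh[OF pnu] True by simp
    finally show ?thesis using ij by simp
  next
    case False
    then show ?thesis unfolding cpf_def using ij SSYT_zero[OF T False] by simp
  qed
qed

lemma cp_wt: "wt nu T + wt ka (cpf N a nu ka T) = aN N a"
proof (rule poly_mapping_eqI)
  fix x
  have T': "cpf N a nu ka T \<in> SSYT N ka" by (rule cp_SSYT)
  have e1: "{j. x \<in> S j} = {j. j < a \<and> x \<in> S j}"
  proof -
    have "x \<in> S j \<Longrightarrow> j < a" for j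
      using colh_nu_big[of j] by (cases "a \<le> j") (auto simp: colset_def)
    thus ?thesis by blast
  qed
  have e2: "{j. x \<in> colset ka (cpf N a nu ka T) j} = {j. j < a \<and> x \<in> {..<N} - S (a - 1 - j)}"
  proof -
    have "x \<in> colset ka (cpf N a nu ka T) j \<longleftrightarrow> j < a \<and> x \<in> {..<N} - S (a - 1 - j)" for j
      using colset_cp[of j] colset_cp_big[of j] by (cases "j < a") auto
    thus ?thesis by blast
  qed
  have "Poly_Mapping.lookup (wt nu T) x + Poly_Mapping.lookup (wt ka (cpf N a nu ka T)) x
      = card {j. j < a \<and> x \<in> S j} + card {j. j < a \<and> x \<in> {..<N} - S (a - 1 - j)}"
    unfolding lookup_wt count_by_cols[OF T pnu] count_by_cols[OF T' pka] e1 e2 ..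
  also have "\<dots> = (if x < N then a else 0)"
  proof (cases "x < N")
    case True
    have "card {j. j < a \<and> x \<in> {..<N} - S (a - 1 - j)} = card {j. j < a \<and> x \<notin> S j}"
      using True flip_card[of a "\<lambda>j. x \<notin> S j"] by simp
    then show ?thesis using True card_split[of a "\<lambda>j. x \<in> S j"] by simp
  next
    case False
    have "x \<notin> S j" for j using S_sub[of j] False by auto
    then show ?thesis using False by simp
  qed
  finally show "Poly_Mapping.lookup (wt nu T + wt ka (cpf N a nu ka T)) x = Poly_Mapping.lookup (aN N a) x"
    by (simp add: lookup_add lookup_aN)
qed

end

end

lemma cpl_count:
  assumes "cpl N a nu ka"
  shows "Kc N ka g = card {T\<in>SSYT N nu. wt nu T + g = aN N a}"
proof -
  interpret A: cpl N a nu ka by (rule assms)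
  interpret B: cpl N a ka nu by (rule A.sym)
  let ?A = "{T\<in>SSYT N nu. wt nu T + g = aN N a}" and ?B = "{T\<in>SSYT N ka. wt ka T = g}"
  have "bij_betw (cpf N a nu ka) ?A ?B"
  proof (rule bij_betw_byWitness[where f' = "cpf N a ka nu"])
    show "cpf N a nu ka ` ?A \<subseteq> ?B"
    proof
      fix T' assume "T' \<in> cpf N a nu ka ` ?A"
      then obtain T where T: "T \<in> SSYT N nu" and e: "wt nu T + g = aN N a" and T': "T' = cpf N a nu ka T" by auto
      have "wt nu T + wt ka (cpf N a nu ka T) = wt nu T + g" using A.cp_wt[OF T] e by simp
      hence "wt ka (cpf N a nu ka T) = g" by simp
      thus "T' \<in> ?B" using A.cp_SSYT[OF T] T' by simp
    qed
    show "cpf N a ka nu ` ?B \<subseteq> ?A"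
    proof
      fix T' assume "T' \<in> cpf N a ka nu ` ?B"
      then obtain T where T: "T \<in> SSYT N ka" and e: "wt ka T = g" and T': "T' = cpf N a ka nu T" by auto
      have "wt ka T + wt nu (cpf N a ka nu T) = aN N a" by (rule B.cp_wt[OF T])
      hence "wt nu (cpf N a ka nu T) + g = aN N a" using e by (simp add: add.commute)
      thus "T' \<in> ?A" using B.cp_SSYT[OF T] T' by simp
    qed
    show "\<forall>T\<in>?A. cpf N a ka nu (cpf N a nu ka T) = T" using A.cp_inv by simp
    show "\<forall>T\<in>?B. cpf N a nu ka (cpf N a ka nu T) = T" using B.cp_inv by simp
  qed
  thus ?thesis unfolding Kc_def by (simp add: bij_betw_same_card)
qed


fun cps :: "nat \<Rightarrow> nat \<Rightarrow> nat list list \<Rightarrow> nat list list \<Rightarrow> (nat \<times> nat \<Rightarrow> nat) list \<Rightarrow> (nat \<times> nat \<Rightarrow> nat) list" where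
  "cps N a (l#ls) (k#ks) (T#Ts) = cpf N a l k T # cps N a ls ks Ts"
| "cps N a _ _ _ = []"

lemma cps_props:
  assumes "list_all2 (cpl N a) ls ks"
  shows "Ts \<in> tup N ls \<Longrightarrow> cps N a ls ks Ts \<in> tup N ks
     \<and> tw ls Ts + tw ks (cps N a ls ks Ts) = aN N (a * length ls)
     \<and> cps N a ks ls (cps N a ls ks Ts) = Ts"
  using assms
proof (induction arbitrary: Ts rule: list_all2_induct)
  case Nil
  then show ?case by (simp add: aN_0)
next
  case (Cons l ls k ks)
  from Cons.prems obtain T Ts' where Ts: "Ts = T # Ts'" and T: "T \<in> SSYT N l" and Ts': "Ts' \<in> tup N ls"
    by auto
  have IH: "cps N a ls ks Ts' \<in> tup N ks \<and> tw ls Ts' + tw ks (cps N a ls ks Ts') = aN N (a * length ls)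
     \<and> cps N a ks ls (cps N a ls ks Ts') = Ts'" by (rule Cons.IH[OF Ts'])
  have c1: "cpf N a l k T \<in> SSYT N k" by (rule cpl.cp_SSYT[OF Cons.hyps(1) T])
  have c2: "wt l T + wt k (cpf N a l k T) = aN N a" by (rule cpl.cp_wt[OF Cons.hyps(1) T])
  have c3: "cpf N a k l (cpf N a l k T) = T" by (rule cpl.cp_inv[OF Cons.hyps(1) T])
  have "tw (l # ls) Ts + tw (k # ks) (cps N a (l # ls) (k # ks) Ts)
      = (wt l T + wt k (cpf N a l k T)) + (tw ls Ts' + tw ks (cps N a ls ks Ts'))"
    using Ts by (simp add: ac_simps)
  also have "\<dots> = aN N (a * length (l # ls))" using c2 IH by (simp add: aN_add)
  finally show ?case using Ts c1 c3 IH by auto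
qed

lemma list_all2_cpl_sym: "list_all2 (cpl N a) ls ks \<Longrightarrow> list_all2 (cpl N a) ks ls"
  by (induction rule: list_all2_induct) (auto intro: cpl.sym)

lemma tup_cpl:
  assumes "list_all2 (cpl N a) ls ks"
  shows "Qc N ks g = card {Ts\<in>tup N ls. tw ls Ts + g = aN N (a * length ls)}"
proof -
  have la: "length ks = length ls" using assms by (simp add: list_all2_lengthD)
  have assms': "list_all2 (cpl N a) ks ls" by (rule list_all2_cpl_sym[OF assms])
  let ?A = "{Ts\<in>tup N ls. tw ls Ts + g = aN N (a * length ls)}" and ?B = "{Ts\<in>tup N ks. tw ks Ts = g}"
  have "bij_betw (cps N a ls ks) ?A ?B"
  proof (rule bij_betw_byWitness[where f' = "cps N a ks ls"])
    show "cps N a ls ks ` ?A \<subseteq> ?B"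
    proof
      fix T' assume "T' \<in> cps N a ls ks ` ?A"
      then obtain Ts where T: "Ts \<in> tup N ls" and e: "tw ls Ts + g = aN N (a * length ls)" and T': "T' = cps N a ls ks Ts" by auto
      note P = cps_props[OF assms T]
      have "tw ls Ts + tw ks (cps N a ls ks Ts) = tw ls Ts + g" using P e by simp
      hence "tw ks (cps N a ls ks Ts) = g" by simp
      thus "T' \<in> ?B" using P T' by simp
    qed
    show "cps N a ks ls ` ?B \<subseteq> ?A"
    proof
      fix T' assume "T' \<in> cps N a ks ls ` ?B"
      then obtain Ts where T: "Ts \<in> tup N ks" and e: "tw ks Ts = g" and T': "T' = cps N a ks ls Ts" by auto
      note P = cps_props[OF assms' T]
      have "tw ls (cps N a ks ls Ts) + g = aN N (a * length ls)" using P e la by (simp add: add.commute)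
      thus "T' \<in> ?A" using P T' by simp
    qed
    show "\<forall>T\<in>?A. cps N a ks ls (cps N a ls ks T) = T" using cps_props[OF assms] by simp
    show "\<forall>T\<in>?B. cps N a ls ks (cps N a ks ls T) = T" using cps_props[OF assms'] by simp
  qed
  thus ?thesis unfolding Qc_def by (simp add: bij_betw_same_card)
qed



lemma down_idx:
  assumes fF: "finite F" and DF: "D \<subseteq> F" and dc: "\<And>j j'. j \<in> D \<Longrightarrow> j' \<in> F \<Longrightarrow> j' \<le> j \<Longrightarrow> j' \<in> D"
    and j: "j \<in> F"
  shows "j \<in> D \<longleftrightarrow> cnt F j < card D"
proof
  assume jD: "j \<in> D"
  have "{y\<in>F. y < j} \<subseteq> D - {j}" using dc[OF jD] by auto
  hence "cnt F j \<le> card (D - {j})" unfolding cnt_def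
    by (intro card_mono) (use fF DF finite_subset in auto)
  also have "\<dots> < card D" using jD fF DF finite_subset by (intro card_Diff1_less) auto
  finally show "cnt F j < card D" .
next
  assume lt: "cnt F j < card D"
  show "j \<in> D"
  proof (rule ccontr)
    assume jD: "j \<notin> D"
    have "D \<subseteq> {y\<in>F. y < j}"
    proof
      fix d assume d: "d \<in> D"
      have "\<not> j \<le> d"
      proof
        assume "j \<le> d" thus False using dc[OF d j] jD by simp
      qed
      thus "d \<in> {y\<in>F. y < j}" using d DF by auto
    qed
    hence "card D \<le> cnt F j" unfolding cnt_def by (intro card_mono) (use fF in auto)
    thus False using lt by simp
  qed
qed

lemma count_lt:
  assumes fF: "finite F"
  shows "card {j\<in>F. cnt F j < s} = min s (card F)"
proof -
  have "{j\<in>F. cnt F j < s} = sel F ` {..<min s (card F)}"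
  proof
    show "{j\<in>F. cnt F j < s} \<subseteq> sel F ` {..<min s (card F)}"
    proof
      fix j assume "j \<in> {j\<in>F. cnt F j < s}"
      hence jF: "j \<in> F" and js: "cnt F j < s" by auto
      obtain r where r: "r < card F" "sel F r = j" using sel_surj[OF fF jF] by blast
      have "cnt F j = r" using cnt_sel[OF fF r(1)] r(2) by simp
      hence "r \<in> {..<min s (card F)}" using r js by simp
      thus "j \<in> sel F ` {..<min s (card F)}" using r(2) by blast
    qed
    show "sel F ` {..<min s (card F)} \<subseteq> {j\<in>F. cnt F j < s}"
    proof
      fix j assume "j \<in> sel F ` {..<min s (card F)}"
      then obtain r where r: "r < s" "r < card F" "j = sel F r" by auto
      show "j \<in> {j\<in>F. cnt F j < s}" using sel_in[OF fF r(2)] cnt_sel[OF fF r(2)] r by simp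
    qed
  qed
  moreover have "inj_on (sel F) {..<min s (card F)}"
  proof (rule inj_onI)
    fix x y assume "x \<in> {..<min s (card F)}" "y \<in> {..<min s (card F)}" "sel F x = sel F y"
    thus "x = y" using sel_inj[OF fF, of x y] by simp
  qed
  ultimately show ?thesis by (simp add: card_image)
qed

section \<open>Swapping two adjacent variables\<close>

definition tr :: "nat \<Rightarrow> nat \<Rightarrow> nat" where
  "tr k x = (if x = k then Suc k else if x = Suc k then k else x)"

lemma tr_tr[simp]: "tr k (tr k x) = x"
  by (simp add: tr_def)

lemma inj_tr: "inj (tr k)"
  by (metis injI tr_tr)

definition swp :: "nat \<Rightarrow> (nat \<Rightarrow>\<^sub>0 nat) \<Rightarrow> (nat \<Rightarrow>\<^sub>0 nat)" where
  "swp k b = Poly_Mapping.map_key (tr k) b"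

lemma lookup_swp: "Poly_Mapping.lookup (swp k b) x = Poly_Mapping.lookup b (tr k x)"
  unfolding swp_def Poly_Mapping.map_key.rep_eq[OF inj_tr] by simp

lemma swp_swp[simp]: "swp k (swp k b) = b"
  by (rule poly_mapping_eqI) (simp add: lookup_swp)

lemma swp_add: "swp k (a + b) = swp k a + swp k b"
  by (rule poly_mapping_eqI) (simp add: lookup_swp lookup_add)

lemma swp_0[simp]: "swp k 0 = 0"
  by (rule poly_mapping_eqI) (simp add: lookup_swp)

section \<open>The Bender-Knuth involution\<close>

definition pk :: "nat list \<Rightarrow> nat \<Rightarrow> (nat \<times> nat \<Rightarrow> nat) \<Rightarrow> nat \<Rightarrow> nat \<Rightarrow> bool" where
  "pk lam k T i j \<longleftrightarrow> (i, j) \<in> cells lam \<and> T (i, j) = k \<and> (Suc i, j) \<in> cells lam \<and> T (Suc i, j) = Suc k"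

definition pk1 :: "nat list \<Rightarrow> nat \<Rightarrow> (nat \<times> nat \<Rightarrow> nat) \<Rightarrow> nat \<Rightarrow> nat \<Rightarrow> bool" where
  "pk1 lam k T i j \<longleftrightarrow> (i, j) \<in> cells lam \<and> T (i, j) = Suc k \<and> 0 < i \<and> (i - 1, j) \<in> cells lam \<and> T (i - 1, j) = k"

definition fr :: "nat list \<Rightarrow> nat \<Rightarrow> (nat \<times> nat \<Rightarrow> nat) \<Rightarrow> nat \<Rightarrow> nat \<Rightarrow> bool" where
  "fr lam k T i j \<longleftrightarrow> (i, j) \<in> cells lam \<and> (T (i, j) = k \<or> T (i, j) = Suc k) \<and> \<not> pk lam k T i j \<and> \<not> pk1 lam k T i j"

definition Fs :: "nat list \<Rightarrow> nat \<Rightarrow> (nat \<times> nat \<Rightarrow> nat) \<Rightarrow> nat \<Rightarrow> nat set" where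
  "Fs lam k T i = {j. fr lam k T i j}"

definition sc :: "nat list \<Rightarrow> nat \<Rightarrow> (nat \<times> nat \<Rightarrow> nat) \<Rightarrow> nat \<Rightarrow> nat" where
  "sc lam k T i = card {j\<in>Fs lam k T i. T (i, j) = Suc k}"

definition bk :: "nat list \<Rightarrow> nat \<Rightarrow> (nat \<times> nat \<Rightarrow> nat) \<Rightarrow> (nat \<times> nat \<Rightarrow> nat)" where
  "bk lam k T = (\<lambda>(i, j). if fr lam k T i j then (if cnt (Fs lam k T i) j < sc lam k T i then k else Suc k) else T (i, j))"

lemma finite_Fs: "finite (Fs lam k T i)"
proof (rule finite_subset)
  show "Fs lam k T i \<subseteq> {..<pn lam i}" by (auto simp: Fs_def fr_def cells_pn)
qed simp

lemma fr_cell: "fr lam k T i j \<Longrightarrow> (i, j) \<in> cells lam"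
  by (simp add: fr_def)

lemma bk_nonfree: "\<not> fr lam k T i j \<Longrightarrow> bk lam k T (i, j) = T (i, j)"
  by (simp add: bk_def)

lemma bk_free: "fr lam k T i j \<Longrightarrow> bk lam k T (i, j) = (if cnt (Fs lam k T i) j < sc lam k T i then k else Suc k)"
  by (simp add: bk_def)

locale bkl =
  fixes n lam k T
  assumes T: "T \<in> SSYT n lam" and p: "is_partition lam" and kn: "Suc k < n"
begin

abbreviation "T' \<equiv> bk lam k T"

lemma colT: "(Suc i, j) \<in> cells lam \<Longrightarrow> T (i, j) < T (Suc i, j)"
  using col_strict[OF T p, of "Suc i" j i] by simp

lemma up_cell: "(Suc i, j) \<in> cells lam \<Longrightarrow> (i, j) \<in> cells lam"
  using cells_down[OF p, of "Suc i" j i j] by simp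

lemma pk_prefix:
  assumes "pk lam k T i j" "j' \<le> j" "T (i, j') = k"
  shows "pk lam k T i j'"
proof -
  have c1: "(Suc i, j) \<in> cells lam" "T (Suc i, j) = Suc k" using assms(1) by (auto simp: pk_def)
  have c2: "(Suc i, j') \<in> cells lam" using cells_down[OF p c1(1) order.refl assms(2)] .
  have c3: "(i, j') \<in> cells lam" using up_cell[OF c2] .
  have "T (Suc i, j') \<le> T (Suc i, j)" using row_weak[OF T p c1(1) assms(2)] .
  moreover have "T (i, j') < T (Suc i, j')" using colT[OF c2] .
  ultimately have "T (Suc i, j') = Suc k" using c1(2) assms(3) by simp
  thus ?thesis using c2 c3 assms(3) by (simp add: pk_def)
qed

lemma pk1_suffix:
  assumes "pk1 lam k T i j" "j \<le> j'" "(i, j') \<in> cells lam" "T (i, j') = Suc k"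
  shows "pk1 lam k T i j'"
proof -
  have c1: "0 < i" "(i - 1, j) \<in> cells lam" "T (i - 1, j) = k" using assms(1) by (auto simp: pk1_def)
  have c2: "(i - 1, j') \<in> cells lam" using cells_down[OF p assms(3), of "i - 1" j'] by simp
  have "T (i - 1, j) \<le> T (i - 1, j')" using row_weak[OF T p c2 assms(2)] .
  moreover have "T (i - 1, j') < T (i, j')" using colT[of "i - 1" j'] assms(3) c1(1) by simp
  ultimately have "T (i - 1, j') = k" using c1(3) assms(4) by simp
  thus ?thesis using c1 c2 assms(3,4) by (simp add: pk1_def)
qed

lemma free_k_below:
  assumes "fr lam k T i j" "T (i, j) = k" "(Suc i, j) \<in> cells lam"
  shows "Suc (Suc k) \<le> T (Suc i, j)"
proof -
  have "T (i, j) < T (Suc i, j)" using colT[OF assms(3)] .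
  moreover have "T (Suc i, j) \<noteq> Suc k" using assms by (auto simp: fr_def pk_def)
  ultimately show ?thesis using assms(2) by simp
qed

lemma free_k1_above:
  assumes "fr lam k T (Suc i) j" "T (Suc i, j) = Suc k"
  shows "T (i, j) < k"
proof -
  have c: "(Suc i, j) \<in> cells lam" using assms(1) fr_cell by blast
  have "T (i, j) < T (Suc i, j)" using colT[OF c] .
  moreover have "T (i, j) \<noteq> k" using assms up_cell[OF c] by (auto simp: fr_def pk1_def)
  ultimately show ?thesis using assms(2) by simp
qed

lemma T'_kk: "fr lam k T i j \<Longrightarrow> T' (i, j) = k \<or> T' (i, j) = Suc k"
  by (simp add: bk_free)

lemma kk_iff: "(T' (i, j) = k \<or> T' (i, j) = Suc k) \<longleftrightarrow> (T (i, j) = k \<or> T (i, j) = Suc k)"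
proof (cases "fr lam k T i j")
  case True
  then show ?thesis using T'_kk[OF True] by (simp add: fr_def)
next
  case False
  then show ?thesis by (simp add: bk_nonfree)
qed

lemma pk_T'_iff: "pk lam k T' i j \<longleftrightarrow> pk lam k T i j"
proof
  assume a: "pk lam k T' i j"
  hence c: "(i, j) \<in> cells lam" "(Suc i, j) \<in> cells lam" "T' (i, j) = k" "T' (Suc i, j) = Suc k"
    by (auto simp: pk_def)
  have "T (i, j) = k \<or> T (i, j) = Suc k" using kk_iff[of i j] c by simp
  moreover have "T (Suc i, j) = k \<or> T (Suc i, j) = Suc k" using kk_iff[of "Suc i" j] c by simp
  moreover have "T (i, j) < T (Suc i, j)" using colT[OF c(2)] .
  ultimately have "T (i, j) = k" "T (Suc i, j) = Suc k" by auto
  thus "pk lam k T i j" using c by (simp add: pk_def)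
next
  assume a: "pk lam k T i j"
  hence c: "(i, j) \<in> cells lam" "(Suc i, j) \<in> cells lam" "T (i, j) = k" "T (Suc i, j) = Suc k"
    by (auto simp: pk_def)
  have "pk1 lam k T (Suc i) j" using c by (simp add: pk1_def)
  hence "\<not> fr lam k T (Suc i) j" "\<not> fr lam k T i j" using a by (auto simp: fr_def)
  thus "pk lam k T' i j" using c by (simp add: pk_def bk_nonfree)
qed

lemma pk1_T'_iff: "pk1 lam k T' i j \<longleftrightarrow> pk1 lam k T i j"
proof
  assume a: "pk1 lam k T' i j"
  hence c: "(i, j) \<in> cells lam" "0 < i" "(i - 1, j) \<in> cells lam" "T' (i, j) = Suc k" "T' (i - 1, j) = k"
    by (auto simp: pk1_def)
  obtain i' where i': "i = Suc i'" using c(2) by (cases i) auto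
  have "T (i, j) = k \<or> T (i, j) = Suc k" using kk_iff[of i j] c by simp
  moreover have "T (i', j) = k \<or> T (i', j) = Suc k" using kk_iff[of i' j] c i' by simp
  moreover have "T (i', j) < T (i, j)" using colT[of i' j] c(1) i' by simp
  ultimately have "T (i', j) = k" "T (i, j) = Suc k" by auto
  thus "pk1 lam k T i j" using c i' by (simp add: pk1_def)
next
  assume a: "pk1 lam k T i j"
  hence c: "(i, j) \<in> cells lam" "0 < i" "(i - 1, j) \<in> cells lam" "T (i, j) = Suc k" "T (i - 1, j) = k"
    by (auto simp: pk1_def)
  obtain i' where i': "i = Suc i'" using c(2) by (cases i) auto
  have "pk lam k T i' j" using c i' by (simp add: pk_def)
  hence "\<not> fr lam k T i' j" "\<not> fr lam k T i j" using a i' by (auto simp: fr_def)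
  thus "pk1 lam k T' i j" using c i' by (simp add: pk1_def bk_nonfree)
qed

lemma fr_T'_iff: "fr lam k T' i j \<longleftrightarrow> fr lam k T i j"
  unfolding fr_def using kk_iff[of i j] pk_T'_iff[of i j] pk1_T'_iff[of i j] by blast

lemma Fs_T': "Fs lam k T' i = Fs lam k T i"
  unfolding Fs_def using fr_T'_iff by blast

lemma kfree_down:
  assumes "j \<in> Fs lam k T i" "j' \<in> Fs lam k T i" "j' \<le> j" "T (i, j) = k"
  shows "T (i, j') = k"
proof -
  have "(i, j) \<in> cells lam" "T (i, j') = k \<or> T (i, j') = Suc k" using assms by (auto simp: Fs_def fr_def)
  moreover have "T (i, j') \<le> T (i, j)" using row_weak[OF T p] calculation(1) assms(3) by simp
  ultimately show ?thesis using assms(4) by auto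
qed

lemma sc_le: "sc lam k T i \<le> card (Fs lam k T i)"
  unfolding sc_def by (rule card_mono[OF finite_Fs]) auto

lemma k_iff_idx:
  assumes "j \<in> Fs lam k T i"
  shows "T (i, j) = k \<longleftrightarrow> cnt (Fs lam k T i) j < card (Fs lam k T i) - sc lam k T i"
proof -
  let ?F = "Fs lam k T i"
  let ?D = "{j\<in>?F. T (i, j) = k}"
  have fin: "finite ?F" by (rule finite_Fs)
  have split: "?F = ?D \<union> {j\<in>?F. T (i, j) = Suc k}" by (auto simp: Fs_def fr_def)
  have "card ?F = card ?D + sc lam k T i"
    unfolding sc_def by (subst split, rule card_Un_disjoint) (use fin in auto)
  hence cD: "card ?D = card ?F - sc lam k T i" by simp
  have "j \<in> ?D \<longleftrightarrow> cnt ?F j < card ?D"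
    by (rule down_idx[OF fin _ _ assms]) (use kfree_down in auto)
  thus ?thesis using assms cD by simp
qed

lemma T'_SSYT: "T' \<in> SSYT n lam"
  unfolding SSYT_def
proof (intro CollectI conjI allI impI ballI)
  fix c assume "c \<notin> cells lam"
  thus "T' c = 0"
  proof (cases c)
    case (Pair i j)
    hence "\<not> fr lam k T i j" using \<open>c \<notin> cells lam\<close> fr_cell by blast
    thus ?thesis using Pair bk_nonfree SSYT_zero[OF T \<open>c \<notin> cells lam\<close>] by simp
  qed
next
  fix c assume c: "c \<in> cells lam"
  show "T' c < n"
  proof (cases c)
    case (Pair i j)
    show ?thesis
    proof (cases "fr lam k T i j")
      case True
      then show ?thesis using T'_kk[OF True] kn Pair by auto
    next
      case False
      then show ?thesis using bk_nonfree SSYT_less[OF T c] Pair by simp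
    qed
  qed
next
  fix i j assume h: "(i, j) \<in> cells lam \<and> (i, Suc j) \<in> cells lam"
  have row: "T (i, j) \<le> T (i, Suc j)" using SSYT_row[OF T] h by simp
  show "T' (i, j) \<le> T' (i, Suc j)"
  proof (cases "fr lam k T i j"; cases "fr lam k T i (Suc j)")
    assume f1: "fr lam k T i j" and f2: "fr lam k T i (Suc j)"
    let ?F = "Fs lam k T i"
    have "j \<in> ?F" using f1 by (simp add: Fs_def)
    hence "cnt ?F j < cnt ?F (Suc j)"
    proof -
      have "{y\<in>?F. y < Suc j} = insert j {y\<in>?F. y < j}" using \<open>j \<in> ?F\<close> by auto
      moreover have "finite {y\<in>?F. y < j}" using finite_Fs by simp
      ultimately show ?thesis unfolding cnt_def by simp
    qed
    thus ?thesis using bk_free[OF f1] bk_free[OF f2] by auto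
  next
    assume f1: "\<not> fr lam k T i j" and f2: "\<not> fr lam k T i (Suc j)"
    thus ?thesis using row by (simp add: bk_nonfree)
  next
    assume f1: "fr lam k T i j" and f2: "\<not> fr lam k T i (Suc j)"
    have "T' (i, j) \<le> Suc k" using T'_kk[OF f1] by auto
    moreover have "Suc k \<le> T (i, Suc j)"
    proof (rule ccontr)
      assume "\<not> Suc k \<le> T (i, Suc j)"
      moreover have "k \<le> T (i, j)" using f1 by (auto simp: fr_def)
      ultimately have tk: "T (i, Suc j) = k" "T (i, j) = k" using row by auto
      hence "pk lam k T i (Suc j) \<or> pk1 lam k T i (Suc j)" using f2 h by (auto simp: fr_def)
      hence "pk lam k T i (Suc j)" using tk by (auto simp: pk1_def)
      hence "pk lam k T i j" using pk_prefix[of i "Suc j" j] tk by simp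
      thus False using f1 by (simp add: fr_def)
    qed
    ultimately show ?thesis using f2 by (simp add: bk_nonfree)
  next
    assume f1: "\<not> fr lam k T i j" and f2: "fr lam k T i (Suc j)"
    have "k \<le> T' (i, Suc j)" using T'_kk[OF f2] by auto
    moreover have "T (i, j) \<le> k"
    proof (rule ccontr)
      assume "\<not> T (i, j) \<le> k"
      moreover have "T (i, Suc j) \<le> Suc k" using f2 by (auto simp: fr_def)
      ultimately have tk: "T (i, j) = Suc k" "T (i, Suc j) = Suc k" using row by auto
      hence "pk lam k T i j \<or> pk1 lam k T i j" using f1 h by (auto simp: fr_def)
      hence "pk1 lam k T i j" using tk by (auto simp: pk_def)
      hence "pk1 lam k T i (Suc j)" using pk1_suffix[of i j "Suc j"] tk h by simp
      thus False using f2 by (simp add: fr_def)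
    qed
    ultimately show ?thesis using f1 by (simp add: bk_nonfree)
  qed
next
  fix i j assume h: "(i, j) \<in> cells lam \<and> (Suc i, j) \<in> cells lam"
  have col: "T (i, j) < T (Suc i, j)" using colT h by simp
  show "T' (i, j) < T' (Suc i, j)"
  proof (cases "fr lam k T i j"; cases "fr lam k T (Suc i) j")
    assume f1: "fr lam k T i j" and f2: "fr lam k T (Suc i) j"
    have "T (i, j) = k \<or> T (i, j) = Suc k" "T (Suc i, j) = k \<or> T (Suc i, j) = Suc k"
      using f1 f2 by (auto simp: fr_def)
    hence "T (i, j) = k" "T (Suc i, j) = Suc k" using col by auto
    hence "pk lam k T i j" using h by (simp add: pk_def)
    thus ?thesis using f1 by (simp add: fr_def)
  next
    assume f1: "\<not> fr lam k T i j" and f2: "\<not> fr lam k T (Suc i) j"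
    thus ?thesis using col by (simp add: bk_nonfree)
  next
    assume f1: "fr lam k T i j" and f2: "\<not> fr lam k T (Suc i) j"
    have "T' (i, j) \<le> Suc k" using T'_kk[OF f1] by auto
    moreover have "Suc (Suc k) \<le> T (Suc i, j)"
    proof (cases "T (i, j) = k")
      case True
      then show ?thesis using free_k_below[OF f1 True] h by simp
    next
      case False
      hence "T (i, j) = Suc k" using f1 by (simp add: fr_def)
      then show ?thesis using col by simp
    qed
    ultimately show ?thesis using f2 by (simp add: bk_nonfree)
  next
    assume f1: "\<not> fr lam k T i j" and f2: "fr lam k T (Suc i) j"
    have "k \<le> T' (Suc i, j)" using T'_kk[OF f2] by auto
    moreover have "T (i, j) < k"
    proof (cases "T (Suc i, j) = Suc k")
      case True
      then show ?thesis using free_k1_above[OF f2 True] by simp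
    next
      case False
      hence "T (Suc i, j) = k" using f2 by (simp add: fr_def)
      then show ?thesis using col by simp
    qed
    ultimately show ?thesis using f1 by (simp add: bk_nonfree)
  qed
qed

lemma sc_T': "sc lam k T' i = card (Fs lam k T i) - sc lam k T i"
proof -
  let ?F = "Fs lam k T i"
  have "{j\<in>Fs lam k T' i. T' (i, j) = Suc k} = ?F - {j\<in>?F. cnt ?F j < sc lam k T i}"
    using bk_free unfolding Fs_T' by (auto simp: Fs_def)
  hence "sc lam k T' i = card (?F - {j\<in>?F. cnt ?F j < sc lam k T i})" by (simp add: sc_def)
  also have "\<dots> = card ?F - card {j\<in>?F. cnt ?F j < sc lam k T i}"
    by (rule card_Diff_subset) (use finite_Fs in auto)
  also have "\<dots> = card ?F - sc lam k T i" using count_lt[OF finite_Fs] sc_le by simp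
  finally show ?thesis .
qed

lemma bk_bk: "bk lam k T' = T"
proof
  fix c :: "nat \<times> nat"
  obtain i j where c: "c = (i, j)" by (cases c)
  show "bk lam k T' c = T c"
  proof (cases "fr lam k T i j")
    case True
    have fT': "fr lam k T' i j" using True fr_T'_iff by simp
    have jF: "j \<in> Fs lam k T i" using True by (simp add: Fs_def)
    have "bk lam k T' (i, j) = (if cnt (Fs lam k T i) j < card (Fs lam k T i) - sc lam k T i then k else Suc k)"
      using bk_free[OF fT'] Fs_T' sc_T' by simp
    also have "\<dots> = T (i, j)" using k_iff_idx[OF jF] True by (auto simp: fr_def)
    finally show ?thesis using c by simp
  next
    case False
    hence "\<not> fr lam k T' i j" using fr_T'_iff by simp
    thus ?thesis using c False by (simp add: bk_nonfree)
  qed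
qed

lemma card_rows: "E \<subseteq> cells lam \<Longrightarrow> card E = (\<Sum>i<length lam. card {j. (i, j) \<in> E})"
proof -
  assume E: "E \<subseteq> cells lam"
  have "E = (SIGMA i:{..<length lam}. {j. (i, j) \<in> E})" using E by (auto simp: cells_def)
  moreover have "finite {j. (i, j) \<in> E}" for i
    by (rule finite_subset[of _ "snd ` cells lam"]) (use E in force, simp)
  ultimately show ?thesis by (metis card_SigmaI finite_lessThan)
qed

lemma count_k: "card {c\<in>cells lam. T' c = k} = card {c\<in>cells lam. T c = Suc k}"
proof -
  let ?P = "{(i, j). pk lam k T i j}" and ?P1 = "{(i, j). pk1 lam k T i j}"
  let ?A = "{(i, j). fr lam k T i j \<and> T' (i, j) = k}" and ?B = "{(i, j). fr lam k T i j \<and> T (i, j) = Suc k}"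
  have e1: "{c\<in>cells lam. T' c = k} = ?P \<union> ?A"
  proof -
    have "c \<in> {c\<in>cells lam. T' c = k} \<longleftrightarrow> c \<in> ?P \<union> ?A" for c
    proof (cases c)
      case (Pair i j)
      show ?thesis
      proof (cases "fr lam k T i j")
        case True
        then show ?thesis using Pair fr_cell[OF True] by (auto simp: fr_def)
      next
        case False
        hence "T' (i, j) = T (i, j)" by (rule bk_nonfree)
        then show ?thesis using Pair False by (auto simp: fr_def pk_def pk1_def)
      qed
    qed
    thus ?thesis by blast
  qed
  have e2: "{c\<in>cells lam. T c = Suc k} = ?P1 \<union> ?B"
  proof -
    have "c \<in> {c\<in>cells lam. T c = Suc k} \<longleftrightarrow> c \<in> ?P1 \<union> ?B" for c
      by (cases c) (auto simp: fr_def pk_def pk1_def)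
    thus ?thesis by blast
  qed
  have sub: "?P \<subseteq> cells lam" "?A \<subseteq> cells lam" "?P1 \<subseteq> cells lam" "?B \<subseteq> cells lam"
    by (auto simp: pk_def pk1_def fr_def)
  have fin: "finite ?P" "finite ?A" "finite ?P1" "finite ?B"
    using sub finite_subset[OF _ finite_cells] by auto
  have d1: "?P \<inter> ?A = {}" by (auto simp: fr_def)
  have d2: "?P1 \<inter> ?B = {}" by (auto simp: fr_def)
  have cP: "card ?P = card ?P1"
  proof (rule bij_betw_same_card[of "\<lambda>(i, j). (Suc i, j)"])
    show "bij_betw (\<lambda>(i, j). (Suc i, j)) ?P ?P1"
    proof (rule bij_betw_byWitness[where f' = "\<lambda>(i, j). (i - 1, j)"])
      show "\<forall>a\<in>?P. (\<lambda>(i, j). (i - 1, j)) ((\<lambda>(i, j). (Suc i, j)) a) = a" by auto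
      show "\<forall>a\<in>?P1. (\<lambda>(i, j). (Suc i, j)) ((\<lambda>(i, j). (i - 1, j)) a) = a" by (auto simp: pk1_def)
      show "(\<lambda>(i, j). (Suc i, j)) ` ?P \<subseteq> ?P1" by (auto simp: pk_def pk1_def)
      show "(\<lambda>(i, j). (i - 1, j)) ` ?P1 \<subseteq> ?P"
      proof
        fix c assume "c \<in> (\<lambda>(i, j). (i - 1, j)) ` ?P1"
        then obtain i j where ij: "pk1 lam k T i j" "c = (i - 1, j)" by auto
        then obtain i' where i': "i = Suc i'" by (cases i) (auto simp: pk1_def)
        show "c \<in> ?P" using ij i' by (auto simp: pk_def pk1_def)
      qed
    qed
  qed
  have cAB: "card ?A = card ?B"
  proof -
    have rA: "card ?A = (\<Sum>i<length lam. card {j. (i, j) \<in> ?A})" by (rule card_rows[OF sub(2)])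
    have rB: "card ?B = (\<Sum>i<length lam. card {j. (i, j) \<in> ?B})" by (rule card_rows[OF sub(4)])
    have "card {j. (i, j) \<in> ?A} = card {j. (i, j) \<in> ?B}" for i
    proof -
      let ?F = "Fs lam k T i"
      have "{j. (i, j) \<in> ?A} = {j\<in>?F. cnt ?F j < sc lam k T i}"
        using bk_free by (auto simp: Fs_def split: if_splits)
      hence "card {j. (i, j) \<in> ?A} = min (sc lam k T i) (card ?F)" using count_lt[OF finite_Fs] by simp
      also have "\<dots> = sc lam k T i" using sc_le by simp
      also have "\<dots> = card {j. (i, j) \<in> ?B}" by (simp add: sc_def Fs_def)
      finally show ?thesis .
    qed
    thus ?thesis using rA rB by simp
  qed
  show ?thesis unfolding e1 e2 using card_Un_disjoint[OF fin(1,2) d1] card_Un_disjoint[OF fin(3,4) d2] cP cAB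
    by simp
qed

end

lemma bk_props:
  assumes T: "T \<in> SSYT n lam" and p: "is_partition lam" and kn: "Suc k < n"
  shows "bk lam k T \<in> SSYT n lam" "bk lam k (bk lam k T) = T" "wt lam (bk lam k T) = swp k (wt lam T)"
proof -
  interpret A: bkl n lam k T by unfold_locales (rule assms)+
  show "bk lam k T \<in> SSYT n lam" by (rule A.T'_SSYT)
  show bb: "bk lam k (bk lam k T) = T" by (rule A.bk_bk)
  interpret B: bkl n lam k "bk lam k T" by unfold_locales (rule A.T'_SSYT, rule p, rule kn)
  have c1: "card {c\<in>cells lam. bk lam k T c = k} = card {c\<in>cells lam. T c = Suc k}" by (rule A.count_k)
  have c2: "card {c\<in>cells lam. bk lam k T c = Suc k} = card {c\<in>cells lam. T c = k}"
    using B.count_k bb by simp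
  show "wt lam (bk lam k T) = swp k (wt lam T)"
  proof (rule poly_mapping_eqI)
    fix x
    show "Poly_Mapping.lookup (wt lam (bk lam k T)) x = Poly_Mapping.lookup (swp k (wt lam T)) x"
    proof (cases "x = k \<or> x = Suc k")
      case True
      then show ?thesis using c1 c2 by (auto simp: lookup_wt lookup_swp tr_def)
    next
      case False
      have "{c\<in>cells lam. bk lam k T c = x} = {c\<in>cells lam. T c = x}"
      proof -
        have "bk lam k T c = x \<longleftrightarrow> T c = x" for c
        proof (cases c)
          case (Pair i j)
          show ?thesis
          proof (cases "fr lam k T i j")
            case True
            then show ?thesis using Pair False A.T'_kk[OF True] by (auto simp: fr_def)
          next
            case False
            then show ?thesis using Pair bk_nonfree by simp
          qed
        qed
        thus ?thesis by blast
      qed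
      then show ?thesis using False by (simp add: lookup_wt lookup_swp tr_def)
    qed
  qed
qed

lemma Kc_swp:
  assumes p: "is_partition lam" and kn: "Suc k < n"
  shows "Kc n lam (swp k b) = Kc n lam b"
proof -
  have "bij_betw (bk lam k) {T\<in>SSYT n lam. wt lam T = b} {T\<in>SSYT n lam. wt lam T = swp k b}"
  proof (rule bij_betw_byWitness[where f' = "bk lam k"])
    show "\<forall>T\<in>{T\<in>SSYT n lam. wt lam T = b}. bk lam k (bk lam k T) = T" using bk_props(2)[OF _ p kn] by simp
    show "\<forall>T\<in>{T\<in>SSYT n lam. wt lam T = swp k b}. bk lam k (bk lam k T) = T" using bk_props(2)[OF _ p kn] by simp
    show "bk lam k ` {T\<in>SSYT n lam. wt lam T = b} \<subseteq> {T\<in>SSYT n lam. wt lam T = swp k b}"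
      using bk_props(1,3)[OF _ p kn] by auto
    show "bk lam k ` {T\<in>SSYT n lam. wt lam T = swp k b} \<subseteq> {T\<in>SSYT n lam. wt lam T = b}"
    proof
      fix T' assume "T' \<in> bk lam k ` {T\<in>SSYT n lam. wt lam T = swp k b}"
      then obtain T where T: "T \<in> SSYT n lam" "wt lam T = swp k b" "T' = bk lam k T" by auto
      have "wt lam T' = swp k (swp k b)" using bk_props(3)[OF T(1) p kn] T by simp
      thus "T' \<in> {T\<in>SSYT n lam. wt lam T = b}" using bk_props(1)[OF T(1) p kn] T by simp
    qed
  qed
  thus ?thesis unfolding Kc_def by (simp add: bij_betw_same_card)
qed

fun bks :: "nat \<Rightarrow> nat list list \<Rightarrow> (nat \<times> nat \<Rightarrow> nat) list \<Rightarrow> (nat \<times> nat \<Rightarrow> nat) list" where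
  "bks k (l#ls) (T#Ts) = bk l k T # bks k ls Ts"
| "bks k _ _ = []"

lemma bks_props:
  assumes "\<forall>l\<in>set ls. is_partition l" and kn: "Suc k < n"
  shows "Ts \<in> tup n ls \<Longrightarrow> bks k ls Ts \<in> tup n ls \<and> bks k ls (bks k ls Ts) = Ts \<and> tw ls (bks k ls Ts) = swp k (tw ls Ts)"
  using assms(1)
proof (induction ls arbitrary: Ts)
  case Nil
  then show ?case by simp
next
  case (Cons l ls)
  from Cons.prems obtain T Ts' where Ts: "Ts = T # Ts'" and T: "T \<in> SSYT n l" and Ts': "Ts' \<in> tup n ls"
    by auto
  have pl: "is_partition l" using Cons.prems by simp
  have IH: "bks k ls Ts' \<in> tup n ls \<and> bks k ls (bks k ls Ts') = Ts' \<and> tw ls (bks k ls Ts') = swp k (tw ls Ts')"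
    using Cons.IH[OF Ts'] Cons.prems by simp
  show ?case using Ts IH bk_props[OF T pl kn] by (auto simp: swp_add)
qed

lemma Qc_swp:
  assumes "\<forall>l\<in>set ls. is_partition l" and kn: "Suc k < n"
  shows "Qc n ls (swp k b) = Qc n ls b"
proof -
  note P = bks_props[OF assms]
  have "bij_betw (bks k ls) {Ts\<in>tup n ls. tw ls Ts = b} {Ts\<in>tup n ls. tw ls Ts = swp k b}"
  proof (rule bij_betw_byWitness[where f' = "bks k ls"])
    show "\<forall>T\<in>{Ts\<in>tup n ls. tw ls Ts = b}. bks k ls (bks k ls T) = T" using P by simp
    show "\<forall>T\<in>{Ts\<in>tup n ls. tw ls Ts = swp k b}. bks k ls (bks k ls T) = T" using P by simp
    show "bks k ls ` {Ts\<in>tup n ls. tw ls Ts = b} \<subseteq> {Ts\<in>tup n ls. tw ls Ts = swp k b}"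
      using P by auto
    show "bks k ls ` {Ts\<in>tup n ls. tw ls Ts = swp k b} \<subseteq> {Ts\<in>tup n ls. tw ls Ts = b}"
    proof
      fix T' assume "T' \<in> bks k ls ` {Ts\<in>tup n ls. tw ls Ts = swp k b}"
      then obtain T where T: "T \<in> tup n ls" "tw ls T = swp k b" "T' = bks k ls T" by auto
      thus "T' \<in> {Ts\<in>tup n ls. tw ls Ts = b}" using P[OF T(1)] by simp
    qed
  qed
  thus ?thesis unfolding Qc_def by (simp add: bij_betw_same_card)
qed



definition lexless :: "nat \<Rightarrow> (nat \<Rightarrow> nat) \<Rightarrow> (nat \<Rightarrow> nat) \<Rightarrow> bool" where
  "lexless p f g \<longleftrightarrow> (\<exists>i<p. (\<forall>t<i. f t = g t) \<and> f i < g i)"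

lemma lexless_irrefl: "\<not> lexless p f f"
  by (simp add: lexless_def)

lemma lexless_trans: assumes "lexless p f g" "lexless p g h" shows "lexless p f h"
proof -
  obtain i1 where i1: "i1 < p" "\<forall>t<i1. f t = g t" "f i1 < g i1" using assms(1) by (auto simp: lexless_def)
  obtain i2 where i2: "i2 < p" "\<forall>t<i2. g t = h t" "g i2 < h i2" using assms(2) by (auto simp: lexless_def)
  show ?thesis
  proof (cases i1 i2 rule: linorder_cases)
    case less
    then show ?thesis unfolding lexless_def using i1 i2 by (intro exI[of _ i1]) auto
  next
    case equal
    then show ?thesis unfolding lexless_def using i1 i2 by (intro exI[of _ i1]) auto
  next
    case greater
    then show ?thesis unfolding lexless_def using i1 i2 by (intro exI[of _ i2]) auto
  qed
qed

lemma lexless_total: "(\<forall>t<p. f t = g t) \<or> lexless p f g \<or> lexless p g f"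
proof (cases "\<forall>t<p. f t = g t")
  case False
  define i where "i = (LEAST t. t < p \<and> f t \<noteq> g t)"
  have ex: "\<exists>t. t < p \<and> f t \<noteq> g t" using False by auto
  have i: "i < p" "f i \<noteq> g i" using LeastI_ex[OF ex] unfolding i_def by auto
  have below: "\<forall>t<i. f t = g t"
  proof (intro allI impI)
    fix t assume "t < i"
    show "f t = g t"
    proof (rule ccontr)
      assume "f t \<noteq> g t"
      hence "i \<le> t" unfolding i_def using \<open>t < i\<close> i(1) by (intro Least_le) simp
      thus False using \<open>t < i\<close> by simp
    qed
  qed
  show ?thesis
  proof (cases "f i < g i")
    case True
    then show ?thesis unfolding lexless_def using i below by blast
  next
    case False
    hence "g i < f i" using i(2) by simp
    then show ?thesis unfolding lexless_def using i below by (metis (full_types))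
  qed
qed simp

lemma ex_lexmax:
  assumes "finite S" "S \<noteq> {}"
  shows "(\<forall>x\<in>S. \<forall>y\<in>S. (\<forall>t<p. h x t = h y t) \<longrightarrow> x = y) \<Longrightarrow> \<exists>x\<in>S. \<forall>y\<in>S. y = x \<or> lexless p (h y) (h x)"
  using assms
proof (induction S rule: finite_ne_induct)
  case (singleton x)
  then show ?case by simp
next
  case (insert x F)
  have injF: "\<forall>x\<in>F. \<forall>y\<in>F. (\<forall>t<p. h x t = h y t) \<longrightarrow> x = y" using insert.prems by blast
  obtain m where m: "m \<in> F" "\<forall>y\<in>F. y = m \<or> lexless p (h y) (h m)"
    using insert.IH[OF injF] by blast
  have tot: "(\<forall>t<p. h x t = h m t) \<or> lexless p (h x) (h m) \<or> lexless p (h m) (h x)"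
    by (rule lexless_total)
  show ?case
  proof (cases "lexless p (h m) (h x)")
    case True
    have "\<forall>y\<in>insert x F. y = x \<or> lexless p (h y) (h x)"
    proof
      fix y assume y: "y \<in> insert x F"
      show "y = x \<or> lexless p (h y) (h x)"
      proof (cases "y = x")
        case False
        hence "y \<in> F" using y by simp
        hence "y = m \<or> lexless p (h y) (h m)" using m(2) by blast
        thus ?thesis using True lexless_trans[of p "h y" "h m" "h x"] by auto
      qed simp
    qed
    then show ?thesis by blast
  next
    case False
    have xm: "(\<forall>t<p. h x t = h m t) \<longrightarrow> x = m" using insert.prems m(1) by blast
    have "x = m \<or> lexless p (h x) (h m)"
      using tot False xm by blast
    hence "\<forall>y\<in>insert x F. y = m \<or> lexless p (h y) (h m)" using m by blast
    then show ?thesis using m(1) by blast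
  qed
qed

lemma part_eq:
  assumes "is_partition a" "is_partition b" "\<And>i. pn a i = pn b i"
  shows "a = b"
proof -
  have "i < length a \<longleftrightarrow> i < length b" for i
    using pn_pos[OF assms(1), of i] pn_pos[OF assms(2), of i] assms(3)[of i] by simp
  hence len: "length a = length b" by (metis linorder_neq_iff order_less_irrefl)
  show ?thesis
  proof (rule nth_equalityI[OF len])
    fix i assume "i < length a"
    thus "a ! i = b ! i" using assms(3)[of i] len by (simp add: pn_def)
  qed
qed

lemma pn_filter:
  "sorted_wrt (\<ge>) xs \<Longrightarrow> pn (filter ((<) 0) xs) i = (if i < length xs then xs ! i else 0)"
proof (induction xs arbitrary: i)
  case Nil
  then show ?case by (simp add: pn_def)
next
  case (Cons x xs)
  show ?case
  proof (cases "0 < x")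
    case True
    show ?thesis
    proof (cases i)
      case 0
      then show ?thesis using True by (simp add: pn_def)
    next
      case (Suc i')
      have "pn (filter ((<) 0) (x # xs)) i = pn (filter ((<) 0) xs) i'"
        using True Suc by (simp add: pn_def)
      also have "\<dots> = (if i' < length xs then xs ! i' else 0)" using Cons by simp
      finally show ?thesis using Suc by simp
    qed
  next
    case False
    hence z: "\<forall>y\<in>set (x # xs). y = 0" using Cons.prems by auto
    hence "filter ((<) 0) (x # xs) = []" by (simp add: filter_empty_conv)
    moreover have "i < length (x # xs) \<Longrightarrow> (x # xs) ! i = 0" using z nth_mem by blast
    ultimately show ?thesis by (simp add: pn_def)
  qed
qed

lemma partition_filter: "sorted_wrt (\<ge>) xs \<Longrightarrow> is_partition (filter ((<) 0) xs)"
  unfolding is_partition_def by (auto intro: sorted_wrt_filter)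

lemma sum_list_filter_pos: "sum_list (filter ((<) (0::nat)) xs) = sum_list xs"
  by (induction xs) auto

lemma length_le_sum: "is_partition a \<Longrightarrow> length a \<le> sum_list a"
proof -
  assume "is_partition a"
  hence "\<forall>x\<in>set a. 1 \<le> x" by (auto simp: is_partition_def)
  thus ?thesis by (induction a) auto
qed

lemma sum_list_pn: "length a \<le> q \<Longrightarrow> sum_list a = (\<Sum>i<q. pn a i)"
proof -
  assume "length a \<le> q"
  have "sum_list a = (\<Sum>i<length a. pn a i)" by (simp add: sum_list_sum_nth atLeast0LessThan pn_def)
  also have "\<dots> = (\<Sum>i<q. pn a i)"
    by (rule sum.mono_neutral_left) (use \<open>length a \<le> q\<close> in \<open>auto simp: pn_def\<close>)
  finally show ?thesis .
qed

lemma finite_partitions: "finite (partitions_of m)"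
proof (rule finite_subset)
  show "partitions_of m \<subseteq> {xs. set xs \<subseteq> {..m} \<and> length xs \<le> m}"
  proof
    fix xs assume xs: "xs \<in> partitions_of m"
    hence p: "is_partition xs" "sum_list xs = m" by (auto simp: partitions_of_def)
    have "set xs \<subseteq> {..m}" using p(2) member_le_sum_list by fastforce
    thus "xs \<in> {xs. set xs \<subseteq> {..m} \<and> length xs \<le> m}" using length_le_sum[OF p(1)] p(2) by simp
  qed
  show "finite {xs. set xs \<subseteq> {..m} \<and> length xs \<le> m}"
    by (rule finite_lists_length_le) simp
qed

section \<open>Triangularity\<close>

lemma row_le:
  assumes T: "T \<in> SSYT n lam" and p: "is_partition lam"
  shows "(r, j) \<in> cells lam \<Longrightarrow> r \<le> T (r, j)"
proof (induction r)
  case 0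
  then show ?case by simp
next
  case (Suc r)
  have c: "(r, j) \<in> cells lam" using cells_down[OF p Suc.prems, of r j] by simp
  have "T (r, j) < T (Suc r, j)" using col_strict[OF T p Suc.prems, of r] by simp
  thus ?case using Suc.IH[OF c] by simp
qed

definition T0 :: "nat list \<Rightarrow> (nat \<times> nat \<Rightarrow> nat)" where
  "T0 lam = (\<lambda>(i, j). if (i, j) \<in> cells lam then i else 0)"

definition mon :: "nat list \<Rightarrow> (nat \<Rightarrow>\<^sub>0 nat)" where
  "mon lam = wt lam (T0 lam)"

lemma row_card: "card {c\<in>cells lam. fst c = t} = pn lam t"
proof -
  have "{c\<in>cells lam. fst c = t} = (\<lambda>j. (t, j)) ` {..<pn lam t}" by (auto simp: cells_pn)
  thus ?thesis by (simp add: card_image inj_on_def)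
qed

lemma lookup_mon: "Poly_Mapping.lookup (mon lam) t = pn lam t"
proof -
  have "{c\<in>cells lam. T0 lam c = t} = {c\<in>cells lam. fst c = t}" by (auto simp: T0_def)
  thus ?thesis unfolding mon_def lookup_wt using row_card by simp
qed

lemma mon_inj: "is_partition a \<Longrightarrow> is_partition b \<Longrightarrow> mon a = mon b \<Longrightarrow> a = b"
  by (rule part_eq) (auto simp: lookup_mon dest: arg_cong[where f = "\<lambda>x. Poly_Mapping.lookup x _"])

lemma T0_SSYT: assumes "is_partition lam" "length lam \<le> p" shows "T0 lam \<in> SSYT p lam"
  unfolding SSYT_def
proof (intro CollectI conjI allI impI ballI)
  fix c assume "c \<notin> cells lam" thus "T0 lam c = 0" by (cases c) (simp add: T0_def)
next
  fix c assume c: "c \<in> cells lam"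
  thus "T0 lam c < p" using assms by (cases c) (auto simp: T0_def cells_def)
next
  fix i j assume "(i, j) \<in> cells lam \<and> (i, Suc j) \<in> cells lam"
  thus "T0 lam (i, j) \<le> T0 lam (i, Suc j)" by (simp add: T0_def)
next
  fix i j assume "(i, j) \<in> cells lam \<and> (Suc i, j) \<in> cells lam"
  thus "T0 lam (i, j) < T0 lam (Suc i, j)" by (simp add: T0_def)
qed

lemma entries_i_in_row:
  assumes T: "T \<in> SSYT n lam" and p: "is_partition lam"
    and below: "\<forall>r<i. \<forall>j. (r, j) \<in> cells lam \<longrightarrow> T (r, j) = r"
  shows "{c\<in>cells lam. T c = i} \<subseteq> {c\<in>cells lam. fst c = i}"
proof
  fix c assume c: "c \<in> {c\<in>cells lam. T c = i}"
  obtain r j where rj: "c = (r, j)" by (cases c)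
  have "r \<le> i" using row_le[OF T p, of r j] c rj by simp
  moreover have "\<not> r < i" using below c rj by auto
  ultimately show "c \<in> {c\<in>cells lam. fst c = i}" using c rj by simp
qed

lemma rows_const:
  assumes T: "T \<in> SSYT n lam" and p: "is_partition lam"
  shows "(\<forall>t<i. Poly_Mapping.lookup (wt lam T) t = pn lam t) \<Longrightarrow> \<forall>r<i. \<forall>j. (r, j) \<in> cells lam \<longrightarrow> T (r, j) = r"
proof (induction i)
  case 0
  then show ?case by simp
next
  case (Suc i)
  have IH: "\<forall>r<i. \<forall>j. (r, j) \<in> cells lam \<longrightarrow> T (r, j) = r" using Suc by simp
  have sub: "{c\<in>cells lam. T c = i} \<subseteq> {c\<in>cells lam. fst c = i}" by (rule entries_i_in_row[OF T p IH])
  have "card {c\<in>cells lam. T c = i} = card {c\<in>cells lam. fst c = i}"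
    using Suc.prems[rule_format, of i] row_card[of lam i] by (simp add: lookup_wt)
  hence eq: "{c\<in>cells lam. T c = i} = {c\<in>cells lam. fst c = i}"
    by (intro card_subset_eq[OF _ sub]) simp
  show ?case
  proof (intro allI impI)
    fix r j assume r: "r < Suc i" "(r, j) \<in> cells lam"
    show "T (r, j) = r"
    proof (cases "r < i")
      case True
      then show ?thesis using IH r by simp
    next
      case False
      hence ri: "r = i" using r by simp
      have "(r, j) \<in> {c\<in>cells lam. fst c = i}" using r ri by simp
      hence "(r, j) \<in> {c\<in>cells lam. T c = i}" by (subst eq)
      thus ?thesis using ri by simp
    qed
  qed
qed

lemma tri:
  assumes T: "T \<in> SSYT p lam" and pl: "is_partition lam"
  shows "(\<forall>t<p. Poly_Mapping.lookup (wt lam T) t = pn lam t) \<or> lexless p (Poly_Mapping.lookup (wt lam T)) (pn lam)"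
proof (cases "\<forall>t<p. Poly_Mapping.lookup (wt lam T) t = pn lam t")
  case False
  let ?w = "Poly_Mapping.lookup (wt lam T)"
  define i where "i = (LEAST t. t < p \<and> ?w t \<noteq> pn lam t)"
  have ex: "\<exists>t. t < p \<and> ?w t \<noteq> pn lam t" using False by auto
  have i: "i < p" "?w i \<noteq> pn lam i" using LeastI_ex[OF ex] unfolding i_def by auto
  have bel: "\<forall>t<i. ?w t = pn lam t"
  proof (intro allI impI)
    fix t assume "t < i"
    show "?w t = pn lam t"
    proof (rule ccontr)
      assume "?w t \<noteq> pn lam t"
      hence "i \<le> t" unfolding i_def using \<open>t < i\<close> i(1) by (intro Least_le) simp
      thus False using \<open>t < i\<close> by simp
    qed
  qed
  have "{c\<in>cells lam. T c = i} \<subseteq> {c\<in>cells lam. fst c = i}"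
    by (rule entries_i_in_row[OF T pl rows_const[OF T pl bel]])
  hence "?w i \<le> pn lam i" unfolding lookup_wt using row_card[of lam i]
    by (metis (no_types, lifting) card_mono finite_cells finite_subset mem_Collect_eq subsetI)
  hence "?w i < pn lam i" using i(2) by simp
  thus ?thesis unfolding lexless_def using i(1) bel by blast
qed simp

lemma tri_eq:
  assumes T: "T \<in> SSYT p lam" and pl: "is_partition lam"
    and e: "\<forall>t<p. Poly_Mapping.lookup (wt lam T) t = pn lam t"
  shows "T = T0 lam"
proof
  fix c :: "nat \<times> nat"
  obtain r j where rj: "c = (r, j)" by (cases c)
  have rc: "\<forall>r<p. \<forall>j. (r, j) \<in> cells lam \<longrightarrow> T (r, j) = r" by (rule rows_const[OF T pl e])
  show "T c = T0 lam c"
  proof (cases "(r, j) \<in> cells lam")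
    case True
    have "r \<le> T (r, j)" by (rule row_le[OF T pl True])
    moreover have "T (r, j) < p" by (rule SSYT_less[OF T True])
    ultimately have "r < p" by simp
    thus ?thesis using rc True rj by (simp add: T0_def)
  next
    case False
    thus ?thesis using SSYT_zero[OF T False] rj by (simp add: T0_def)
  qed
qed

lemma Kc_mon: assumes "is_partition lam" "length lam \<le> p" shows "Kc p lam (mon lam) = 1"
proof -
  have "{T\<in>SSYT p lam. wt lam T = mon lam} = {T0 lam}"
  proof
    show "{T\<in>SSYT p lam. wt lam T = mon lam} \<subseteq> {T0 lam}"
    proof
      fix T assume "T \<in> {T\<in>SSYT p lam. wt lam T = mon lam}"
      hence T: "T \<in> SSYT p lam" "wt lam T = mon lam" by auto
      have "T = T0 lam" by (rule tri_eq[OF T(1) assms(1)]) (simp add: T(2) lookup_mon)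
      thus "T \<in> {T0 lam}" by simp
    qed
    show "{T0 lam} \<subseteq> {T\<in>SSYT p lam. wt lam T = mon lam}"
      using T0_SSYT[OF assms] by (simp add: mon_def)
  qed
  thus ?thesis unfolding Kc_def by simp
qed

lemma Kc_nz_ex: "Kc p lam b \<noteq> 0 \<Longrightarrow> \<exists>T. T \<in> SSYT p lam \<and> wt lam T = b"
proof -
  assume "Kc p lam b \<noteq> 0"
  hence "{T\<in>SSYT p lam. wt lam T = b} \<noteq> {}" unfolding Kc_def by (intro notI) simp
  thus ?thesis by blast
qed

lemma Kc_nz:
  assumes "Kc p lam b \<noteq> 0" "is_partition lam"
  shows "b = mon lam \<or> lexless p (Poly_Mapping.lookup b) (pn lam)"
proof -
  obtain T where T: "T \<in> SSYT p lam" "wt lam T = b" using Kc_nz_ex[OF assms(1)] by blast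
  show ?thesis
  proof (cases "\<forall>t<p. Poly_Mapping.lookup (wt lam T) t = pn lam t")
    case True
    hence "T = T0 lam" by (rule tri_eq[OF T(1) assms(2)])
    thus ?thesis using T(2) by (simp add: mon_def)
  next
    case False
    hence "lexless p (Poly_Mapping.lookup (wt lam T)) (pn lam)" using tri[OF T(1) assms(2)] by blast
    thus ?thesis using T(2) by simp
  qed
qed

lemma Kc_len:
  assumes "Kc p lam b \<noteq> 0" "is_partition lam"
  shows "length lam \<le> p"
proof (rule ccontr)
  assume "\<not> length lam \<le> p"
  hence "(p, 0) \<in> cells lam" using pn_pos[OF assms(2), of p] by (simp add: cells_pn)
  moreover obtain T where T: "T \<in> SSYT p lam" using Kc_nz_ex[OF assms(1)] by blast
  ultimately show False using row_le[OF T assms(2), of p 0] SSYT_less[OF T, of "(p, 0)"] by simp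
qed

lemma wt_support:
  assumes T: "T \<in> SSYT p lam"
  shows "p \<le> t \<Longrightarrow> Poly_Mapping.lookup (wt lam T) t = 0"
proof -
  assume "p \<le> t"
  hence "{c\<in>cells lam. T c = t} = {}" using SSYT_less[OF T] by fastforce
  thus ?thesis by (simp add: lookup_wt)
qed

lemma wt_deg:
  assumes T: "T \<in> SSYT p lam"
  shows "(\<Sum>t<p. Poly_Mapping.lookup (wt lam T) t) = sum_list lam"
proof -
  have "cells lam = (\<Union>t\<in>{..<p}. {c\<in>cells lam. T c = t})" using SSYT_less[OF T] by auto
  moreover have "card (\<Union>t\<in>{..<p}. {c\<in>cells lam. T c = t}) = (\<Sum>t<p. card {c\<in>cells lam. T c = t})"
    by (rule card_UN_disjoint) auto
  ultimately have "card (cells lam) = (\<Sum>t<p. card {c\<in>cells lam. T c = t})" by simp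
  thus ?thesis by (simp add: lookup_wt card_cells)
qed

definition Mon :: "nat \<Rightarrow> nat \<Rightarrow> (nat \<Rightarrow>\<^sub>0 nat) set" where
  "Mon p m = {b. (\<forall>t. p \<le> t \<longrightarrow> Poly_Mapping.lookup b t = 0) \<and> (\<Sum>t<p. Poly_Mapping.lookup b t) = m}"

lemma Mon_eq: "b \<in> Mon p m \<Longrightarrow> b' \<in> Mon p m' \<Longrightarrow> \<forall>t<p. Poly_Mapping.lookup b t = Poly_Mapping.lookup b' t \<Longrightarrow> b = b'"
  unfolding Mon_def by (rule poly_mapping_eqI) (metis (mono_tags, lifting) mem_Collect_eq not_le)

lemma finite_Mon: "finite (Mon p m)"
proof -
  let ?F = "{f. \<forall>x. (x \<in> {..<p} \<longrightarrow> f x \<in> {..m}) \<and> (x \<notin> {..<p} \<longrightarrow> f x = 0)}"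
  have fin: "finite ?F" by (rule finite_set_of_finite_funs) auto
  have "Poly_Mapping.lookup ` Mon p m \<subseteq> ?F"
  proof
    fix f assume "f \<in> Poly_Mapping.lookup ` Mon p m"
    then obtain b where b: "b \<in> Mon p m" "f = Poly_Mapping.lookup b" by auto
    have "Poly_Mapping.lookup b x \<le> m" if "x < p" for x
    proof -
      have "Poly_Mapping.lookup b x \<le> (\<Sum>t<p. Poly_Mapping.lookup b t)"
        by (rule member_le_sum) (use that in auto)
      thus ?thesis using b(1) by (simp add: Mon_def)
    qed
    thus "f \<in> ?F" using b by (auto simp: Mon_def)
  qed
  hence "finite (Poly_Mapping.lookup ` Mon p m)" using fin finite_subset by blast
  moreover have "inj_on Poly_Mapping.lookup (Mon p m)" by (rule inj_onI) (simp add: poly_mapping_eqI)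
  ultimately show ?thesis using finite_imageD by blast
qed

lemma Kc_Mon: "Kc p lam b \<noteq> 0 \<Longrightarrow> b \<in> Mon p (sum_list lam)"
proof -
  assume "Kc p lam b \<noteq> 0"
  then obtain T where T: "T \<in> SSYT p lam" "wt lam T = b" using Kc_nz_ex by blast
  show ?thesis unfolding Mon_def using wt_support[OF T(1)] wt_deg[OF T(1)] T(2) by auto
qed

lemma mon_Mon: "is_partition lam \<Longrightarrow> length lam \<le> p \<Longrightarrow> mon lam \<in> Mon p (sum_list lam)"
  using Kc_mon[of lam p] Kc_Mon[of p lam "mon lam"] by simp



lemma lookup_mon_fun: "Poly_Mapping.lookup (mon lam) = pn lam"
  by (rule ext) (simp add: lookup_mon)

lemma lexless_asym: "lexless p f g \<Longrightarrow> lexless p g f \<Longrightarrow> False"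
  using lexless_irrefl lexless_trans by metis

lemma eval_max:
  assumes fin: "finite S" and parts: "\<forall>nu\<in>S. is_partition nu \<and> length nu \<le> p"
    and n0: "nu0 \<in> S" and mx: "\<forall>nu\<in>S. c nu \<noteq> 0 \<longrightarrow> nu = nu0 \<or> lexless p (pn nu) (pn nu0)"
  shows "(\<Sum>nu\<in>S. c nu * int (Kc p nu (mon nu0))) = c nu0"
proof -
  have "(\<Sum>nu\<in>S. c nu * int (Kc p nu (mon nu0))) = c nu0 * int (Kc p nu0 (mon nu0)) + (\<Sum>nu\<in>S - {nu0}. c nu * int (Kc p nu (mon nu0)))"
    using fin n0 by (simp add: sum.remove)
  also have "(\<Sum>nu\<in>S - {nu0}. c nu * int (Kc p nu (mon nu0))) = 0"
  proof (rule sum.neutral, rule ballI)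
    fix nu assume nu: "nu \<in> S - {nu0}"
    show "c nu * int (Kc p nu (mon nu0)) = 0"
    proof (rule ccontr)
      assume "c nu * int (Kc p nu (mon nu0)) \<noteq> 0"
      hence c: "c nu \<noteq> 0" and k: "Kc p nu (mon nu0) \<noteq> 0" by auto
      have pnu: "is_partition nu" "is_partition nu0" using parts nu n0 by auto
      have l1: "lexless p (pn nu) (pn nu0)" using mx nu c by auto
      from Kc_nz[OF k pnu(1)] show False
      proof
        assume "mon nu0 = mon nu" thus False using mon_inj[OF pnu(2) pnu(1)] nu by auto
      next
        assume "lexless p (Poly_Mapping.lookup (mon nu0)) (pn nu)"
        hence "lexless p (pn nu0) (pn nu)" by (simp add: lookup_mon_fun)
        thus False using l1 lexless_asym by blast
      qed
    qed
  qed
  finally show ?thesis using Kc_mon[of nu0 p] parts n0 by simp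
qed

lemma uniq:
  assumes fin: "finite S" and parts: "\<forall>nu\<in>S. is_partition nu"
    and z: "\<forall>b. (\<Sum>nu\<in>S. c nu * int (Kc p nu b)) = 0"
    and nu: "nu \<in> S" "length nu \<le> p"
  shows "c nu = 0"
proof (rule ccontr)
  assume cnu: "c nu \<noteq> 0"
  let ?S' = "{nu\<in>S. length nu \<le> p}"
  let ?Z = "{nu\<in>?S'. c nu \<noteq> 0}"
  have finZ: "finite ?Z" using fin by simp
  have neZ: "?Z \<noteq> {}" using nu cnu by auto
  have injZ: "\<forall>x\<in>?Z. \<forall>y\<in>?Z. (\<forall>t<p. pn x t = pn y t) \<longrightarrow> x = y"
  proof (intro ballI impI)
    fix x y assume x: "x \<in> ?Z" and y: "y \<in> ?Z" and e: "\<forall>t<p. pn x t = pn y t"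
    have "pn x t = pn y t" for t
    proof (cases "t < p")
      case False
      thus ?thesis using x y by (simp add: pn_def)
    qed (use e in simp)
    thus "x = y" using part_eq parts x y by blast
  qed
  obtain nu0 where nu0: "nu0 \<in> ?Z" "\<forall>y\<in>?Z. y = nu0 \<or> lexless p (pn y) (pn nu0)"
    using ex_lexmax[OF finZ neZ injZ] by blast
  have "(\<Sum>nu\<in>S. c nu * int (Kc p nu (mon nu0))) = (\<Sum>nu\<in>?S'. c nu * int (Kc p nu (mon nu0)))"
  proof (rule sum.mono_neutral_right[OF fin])
    show "?S' \<subseteq> S" by auto
    show "\<forall>i\<in>S - ?S'. c i * int (Kc p i (mon nu0)) = 0"
    proof
      fix i assume i: "i \<in> S - ?S'"
      have "Kc p i (mon nu0) = 0"
      proof (rule ccontr)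
        assume "Kc p i (mon nu0) \<noteq> 0"
        hence "length i \<le> p" using Kc_len parts i by blast
        thus False using i by simp
      qed
      thus "c i * int (Kc p i (mon nu0)) = 0" by simp
    qed
  qed
  also have "\<dots> = c nu0"
  proof (rule eval_max)
    show "finite ?S'" using fin by simp
    show "\<forall>nu\<in>?S'. is_partition nu \<and> length nu \<le> p" using parts by simp
    show "nu0 \<in> ?S'" using nu0 by simp
    show "\<forall>nu\<in>?S'. c nu \<noteq> 0 \<longrightarrow> nu = nu0 \<or> lexless p (pn nu) (pn nu0)" using nu0 by simp
  qed
  finally show False using z nu0 by simp
qed

definition U :: "nat \<Rightarrow> nat \<Rightarrow> ((nat \<Rightarrow>\<^sub>0 nat) \<Rightarrow> int) \<Rightarrow> (nat \<Rightarrow>\<^sub>0 nat) set" where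
  "U p m f = {g\<in>Mon p m. \<exists>b. f b \<noteq> 0 \<and> (g = b \<or> lexless p (Poly_Mapping.lookup g) (Poly_Mapping.lookup b))}"

lemma expand:
  assumes "\<forall>b. f b \<noteq> 0 \<longrightarrow> b \<in> Mon p m"
    and "\<forall>k b. Suc k < p \<longrightarrow> f (swp k b) = f b"
  shows "\<exists>d. (\<forall>nu. d nu \<noteq> 0 \<longrightarrow> nu \<in> partitions_of m \<and> length nu \<le> p) \<and>
             (\<forall>b. f b = (\<Sum>nu\<in>partitions_of m. d nu * int (Kc p nu b)))"
  using assms
proof (induction "card (U p m f)" arbitrary: f rule: less_induct)
  case less
  show ?case
  proof (cases "\<forall>b. f b = 0")
    case True
    then show ?thesis by (intro exI[of _ "\<lambda>_. 0"]) simp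
  next
    case False
    let ?S = "{b. f b \<noteq> 0}"
    have SM: "?S \<subseteq> Mon p m" using less.prems(1) by blast
    have finS: "finite ?S" using SM finite_Mon finite_subset by blast
    have neS: "?S \<noteq> {}" using False by auto
    have injS: "\<forall>x\<in>?S. \<forall>y\<in>?S. (\<forall>t<p. Poly_Mapping.lookup x t = Poly_Mapping.lookup y t) \<longrightarrow> x = y"
      using Mon_eq SM by blast
    obtain be where be: "be \<in> ?S" "\<forall>y\<in>?S. y = be \<or> lexless p (Poly_Mapping.lookup y) (Poly_Mapping.lookup be)"
      using ex_lexmax[OF finS neS injS] by blast
    have fbe: "f be \<noteq> 0" using be(1) by simp
    have beM: "be \<in> Mon p m" using SM be(1) by blast
    have dec: "Poly_Mapping.lookup be (Suc t) \<le> Poly_Mapping.lookup be t" if st: "Suc t < p" for t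
    proof (rule ccontr)
      assume a: "\<not> Poly_Mapping.lookup be (Suc t) \<le> Poly_Mapping.lookup be t"
      have "f (swp t be) = f be" using less.prems(2) st by blast
      hence "swp t be \<in> ?S" using fbe by simp
      hence o: "swp t be = be \<or> lexless p (Poly_Mapping.lookup (swp t be)) (Poly_Mapping.lookup be)" using be(2) by blast
      have l: "lexless p (Poly_Mapping.lookup be) (Poly_Mapping.lookup (swp t be))"
        unfolding lexless_def
      proof (intro exI[of _ t] conjI allI impI)
        show "t < p" using st by simp
        show "Poly_Mapping.lookup be t < Poly_Mapping.lookup (swp t be) t" using a by (simp add: lookup_swp tr_def)
        fix s assume "s < t"
        thus "Poly_Mapping.lookup be s = Poly_Mapping.lookup (swp t be) s" by (simp add: lookup_swp tr_def)
      qed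
      from o show False
      proof
        assume "swp t be = be" thus False using l lexless_irrefl by metis
      next
        assume "lexless p (Poly_Mapping.lookup (swp t be)) (Poly_Mapping.lookup be)"
        thus False using l lexless_asym by blast
      qed
    qed
    have anti: "j < p \<Longrightarrow> i \<le> j \<Longrightarrow> Poly_Mapping.lookup be j \<le> Poly_Mapping.lookup be i" for i j
    proof (induction j)
      case 0
      then show ?case by simp
    next
      case (Suc j)
      show ?case
      proof (cases "i = Suc j")
        case False
        hence "i \<le> j" using Suc.prems by simp
        hence "Poly_Mapping.lookup be j \<le> Poly_Mapping.lookup be i" using Suc by simp
        thus ?thesis using dec[of j] Suc.prems by simp
      qed simp
    qed
    define xs where "xs = map (Poly_Mapping.lookup be) [0..<p]"
    define nu where "nu = filter ((<) 0) xs"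
    have sxs: "sorted_wrt (\<ge>) xs"
      unfolding xs_def sorted_wrt_iff_nth_less using anti by simp
    have pnnu: "pn nu t = Poly_Mapping.lookup be t" for t
      using pn_filter[OF sxs, of t] beM unfolding nu_def xs_def Mon_def by auto
    have monnu: "mon nu = be" by (rule poly_mapping_eqI) (simp add: lookup_mon pnnu)
    have pnu: "is_partition nu" unfolding nu_def by (rule partition_filter[OF sxs])
    have snu: "sum_list nu = m"
    proof -
      have "sum_list nu = sum_list xs" by (simp add: nu_def sum_list_filter_pos)
      also have "\<dots> = (\<Sum>t<p. Poly_Mapping.lookup be t)"
        by (simp add: xs_def sum_list_sum_nth atLeast0LessThan)
      finally show ?thesis using beM by (simp add: Mon_def)
    qed
    have lnu: "length nu \<le> p" unfolding nu_def xs_def using length_filter_le[of "(<) 0" "map (Poly_Mapping.lookup be) [0..<p]"] by simp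
    have nuP: "nu \<in> partitions_of m" using pnu snu by (simp add: partitions_of_def)
    define g where "g b = f b - f be * int (Kc p nu b)" for b
    have g1: "\<forall>b. g b \<noteq> 0 \<longrightarrow> b \<in> Mon p m"
    proof (intro allI impI)
      fix b assume "g b \<noteq> 0"
      hence "f b \<noteq> 0 \<or> Kc p nu b \<noteq> 0" unfolding g_def by auto
      thus "b \<in> Mon p m" using less.prems(1) Kc_Mon[of p nu b] snu by auto
    qed
    have g2: "\<forall>k b. Suc k < p \<longrightarrow> g (swp k b) = g b"
      using less.prems(2) Kc_swp[OF pnu] unfolding g_def by simp
    have gbe: "g be = 0" using Kc_mon[OF pnu lnu] monnu unfolding g_def by simp
    have finU: "finite (U p m f)" unfolding U_def using finite_Mon by simp
    have sub: "U p m g \<subseteq> U p m f - {be}"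
    proof
      fix ga assume ga: "ga \<in> U p m g"
      then obtain b where b: "g b \<noteq> 0" "ga = b \<or> lexless p (Poly_Mapping.lookup ga) (Poly_Mapping.lookup b)"
        and gaM: "ga \<in> Mon p m" unfolding U_def by blast
      have bbe: "b \<noteq> be" using b(1) gbe by auto
      have lb: "lexless p (Poly_Mapping.lookup b) (Poly_Mapping.lookup be)"
      proof (cases "f b \<noteq> 0")
        case True
        thus ?thesis using be(2) bbe by auto
      next
        case False
        hence "Kc p nu b \<noteq> 0" using b(1) unfolding g_def by auto
        from Kc_nz[OF this pnu] show ?thesis
        proof
          assume "b = mon nu" thus ?thesis using monnu bbe by simp
        next
          assume "lexless p (Poly_Mapping.lookup b) (pn nu)"
          moreover have "pn nu = Poly_Mapping.lookup be" by (rule ext) (rule pnnu)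
          ultimately show ?thesis by simp
        qed
      qed
      have lga: "lexless p (Poly_Mapping.lookup ga) (Poly_Mapping.lookup be)"
        using b(2) lb lexless_trans by blast
      hence "ga \<noteq> be" using lexless_irrefl by metis
      moreover have "ga \<in> U p m f" unfolding U_def using gaM lga fbe by blast
      ultimately show "ga \<in> U p m f - {be}" by simp
    qed
    have beU: "be \<in> U p m f" unfolding U_def using beM fbe by blast
    have "card (U p m g) \<le> card (U p m f - {be})" using sub finU by (intro card_mono) auto
    also have "\<dots> < card (U p m f)" by (rule card_Diff1_less[OF finU beU])
    finally have lt: "card (U p m g) < card (U p m f)" .
    obtain d' where d': "\<forall>nu. d' nu \<noteq> 0 \<longrightarrow> nu \<in> partitions_of m \<and> length nu \<le> p"
      "\<forall>b. g b = (\<Sum>nu\<in>partitions_of m. d' nu * int (Kc p nu b))"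
      using less.hyps[OF lt g1 g2] by blast
    define d where "d mu = d' mu + (if mu = nu then f be else 0)" for mu
    have "\<forall>mu. d mu \<noteq> 0 \<longrightarrow> mu \<in> partitions_of m \<and> length mu \<le> p"
      using d' nuP lnu unfolding d_def by (auto split: if_splits)
    moreover have "\<forall>b. f b = (\<Sum>mu\<in>partitions_of m. d mu * int (Kc p mu b))"
    proof
      fix b
      have "(\<Sum>mu\<in>partitions_of m. d mu * int (Kc p mu b))
          = (\<Sum>mu\<in>partitions_of m. d' mu * int (Kc p mu b)) + (\<Sum>mu\<in>partitions_of m. (if mu = nu then f be * int (Kc p nu b) else 0))"
      proof -
        have "(\<Sum>mu\<in>partitions_of m. d mu * int (Kc p mu b)) =
          (\<Sum>mu\<in>partitions_of m. d' mu * int (Kc p mu b) + (if mu = nu then f be * int (Kc p nu b) else 0))"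
          by (rule sum.cong) (auto simp: d_def distrib_right)
        also have "\<dots> = (\<Sum>mu\<in>partitions_of m. d' mu * int (Kc p mu b)) + (\<Sum>mu\<in>partitions_of m. (if mu = nu then f be * int (Kc p nu b) else 0))"
          by (rule sum.distrib)
        finally show ?thesis .
      qed
      also have "(\<Sum>mu\<in>partitions_of m. (if mu = nu then f be * int (Kc p nu b) else 0)) = f be * int (Kc p nu b)"
        using nuP finite_partitions by (simp add: sum.delta)
      finally show "f b = (\<Sum>mu\<in>partitions_of m. d mu * int (Kc p mu b))"
        using d'(2) unfolding g_def by (metis diff_add_cancel)
    qed
    ultimately show ?thesis by blast
  qed
qed

section \<open>Restriction of variables\<close>

lemma SSYT_restrict:
  assumes T: "T \<in> SSYT q lam" and b: "\<forall>c\<in>cells lam. T c < p"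
  shows "T \<in> SSYT p lam"
  unfolding SSYT_def
proof (intro CollectI conjI allI impI ballI)
  fix c assume "c \<notin> cells lam" thus "T c = 0" by (rule SSYT_zero[OF T])
next
  fix c assume "c \<in> cells lam" thus "T c < p" using b by blast
next
  fix i j assume "(i, j) \<in> cells lam \<and> (i, Suc j) \<in> cells lam"
  thus "T (i, j) \<le> T (i, Suc j)" using SSYT_row[OF T] by blast
next
  fix i j assume "(i, j) \<in> cells lam \<and> (Suc i, j) \<in> cells lam"
  thus "T (i, j) < T (Suc i, j)" using SSYT_col[OF T] by blast
qed

lemma SSYT_mono: assumes "p \<le> q" "T \<in> SSYT p lam" shows "T \<in> SSYT q lam"
  by (rule SSYT_restrict[OF assms(2)]) (use SSYT_less[OF assms(2)] assms(1) in fastforce)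

lemma wt_pos: "c \<in> cells lam \<Longrightarrow> 0 < Poly_Mapping.lookup (wt lam T) (T c)"
proof -
  assume c: "c \<in> cells lam"
  have "c \<in> {c'\<in>cells lam. T c' = T c}" using c by simp
  hence "{c'\<in>cells lam. T c' = T c} \<noteq> {}" by blast
  thus ?thesis by (simp add: lookup_wt card_gt_0_iff)
qed

lemma SSYT_restrict_wt:
  assumes T: "T \<in> SSYT q lam" and z: "\<forall>t. p \<le> t \<longrightarrow> Poly_Mapping.lookup (wt lam T) t = 0"
  shows "T \<in> SSYT p lam"
proof (rule SSYT_restrict[OF T], rule ballI)
  fix c assume "c \<in> cells lam"
  hence "0 < Poly_Mapping.lookup (wt lam T) (T c)" by (rule wt_pos)
  show "T c < p"
  proof (rule ccontr)
    assume "\<not> T c < p"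
    hence "Poly_Mapping.lookup (wt lam T) (T c) = 0" using z by simp
    thus False using \<open>0 < Poly_Mapping.lookup (wt lam T) (T c)\<close> by simp
  qed
qed

lemma Kc_restrict:
  assumes "p \<le> q" "\<forall>t. p \<le> t \<longrightarrow> Poly_Mapping.lookup b t = 0"
  shows "Kc q lam b = Kc p lam b"
proof -
  have "{T\<in>SSYT q lam. wt lam T = b} = {T\<in>SSYT p lam. wt lam T = b}"
    using SSYT_restrict_wt SSYT_mono[OF assms(1)] assms(2) by blast
  thus ?thesis by (simp add: Kc_def)
qed

lemma tw_props:
  "Ts \<in> tup p ls \<Longrightarrow> (\<forall>t. p \<le> t \<longrightarrow> Poly_Mapping.lookup (tw ls Ts) t = 0) \<and>
     (\<Sum>t<p. Poly_Mapping.lookup (tw ls Ts) t) = sum_list (map sum_list ls)"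
proof (induction ls arbitrary: Ts)
  case Nil
  then show ?case by simp
next
  case (Cons l ls)
  from Cons.prems obtain T Ts' where Ts: "Ts = T # Ts'" and T: "T \<in> SSYT p l" and Ts': "Ts' \<in> tup p ls"
    by auto
  note IH = Cons.IH[OF Ts']
  show ?case using IH wt_support[OF T] wt_deg[OF T] Ts by (simp add: lookup_add sum.distrib)
qed

lemma Qc_Mon: "Qc p ls b \<noteq> 0 \<Longrightarrow> b \<in> Mon p (sum_list (map sum_list ls))"
proof -
  assume "Qc p ls b \<noteq> 0"
  hence "{Ts\<in>tup p ls. tw ls Ts = b} \<noteq> {}" unfolding Qc_def by (intro notI) simp
  then obtain Ts where Ts: "Ts \<in> tup p ls" "tw ls Ts = b" by blast
  show ?thesis unfolding Mon_def using tw_props[OF Ts(1)] Ts(2) by auto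
qed

lemma tup_mono: "p \<le> q \<Longrightarrow> Ts \<in> tup p ls \<Longrightarrow> Ts \<in> tup q ls"
proof (induction ls arbitrary: Ts)
  case Nil
  then show ?case by simp
next
  case (Cons l ls)
  from Cons.prems obtain T Ts' where Ts: "Ts = T # Ts'" and T: "T \<in> SSYT p l" and Ts': "Ts' \<in> tup p ls"
    by auto
  show ?case using SSYT_mono[OF Cons.prems(1) T] Cons.IH[OF Cons.prems(1) Ts'] Ts by auto
qed

lemma tup_restrict:
  "Ts \<in> tup q ls \<Longrightarrow> \<forall>t. p \<le> t \<longrightarrow> Poly_Mapping.lookup (tw ls Ts) t = 0 \<Longrightarrow> Ts \<in> tup p ls"
proof (induction ls arbitrary: Ts)
  case Nil
  then show ?case by simp
next
  case (Cons l ls)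
  from Cons.prems(1) obtain T Ts' where Ts: "Ts = T # Ts'" and T: "T \<in> SSYT q l" and Ts': "Ts' \<in> tup q ls"
    by auto
  have z1: "\<forall>t. p \<le> t \<longrightarrow> Poly_Mapping.lookup (wt l T) t = 0" using Cons.prems(2) Ts by (simp add: lookup_add)
  have z2: "\<forall>t. p \<le> t \<longrightarrow> Poly_Mapping.lookup (tw ls Ts') t = 0" using Cons.prems(2) Ts by (simp add: lookup_add)
  show ?case using SSYT_restrict_wt[OF T z1] Cons.IH[OF Ts' z2] Ts by auto
qed

lemma Qc_restrict:
  assumes "p \<le> q" "\<forall>t. p \<le> t \<longrightarrow> Poly_Mapping.lookup b t = 0"
  shows "Qc q ls b = Qc p ls b"
proof -
  have "{Ts\<in>tup q ls. tw ls Ts = b} = {Ts\<in>tup p ls. tw ls Ts = b}"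
    using tup_restrict tup_mono[OF assms(1)] assms(2) by blast
  thus ?thesis by (simp add: Qc_def)
qed

section \<open>Characterising the LR coefficient\<close>

lemma lookup_exp: "Poly_Mapping.lookup (\<Sum>nu\<in>A. of_int (d nu) * schur n nu) b = (\<Sum>nu\<in>A. d nu * int (Kc n nu b))"
  by (simp add: lookup_sum lookup_ofint_mult lookup_schur)

lemma part_len: "mu \<in> partitions_of m \<Longrightarrow> length mu \<le> m"
  using length_le_sum by (auto simp: partitions_of_def)

lemma LR_char:
  assumes "prod_list (map (schur (sum_list (map sum_list ls))) ls)
     = (\<Sum>nu\<in>partitions_of (sum_list (map sum_list ls)). of_int (d nu) * schur (sum_list (map sum_list ls)) nu)"
  shows "LR_coeff ls mu = (if mu \<in> partitions_of (sum_list (map sum_list ls)) then d mu else 0)"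
proof -
  let ?m = "sum_list (map sum_list ls)"
  let ?P = "partitions_of ?m"
  show ?thesis unfolding LR_coeff_def Let_def
  proof (rule the_equality)
    show "\<exists>d'. prod_list (map (schur ?m) ls) = (\<Sum>nu\<in>?P. of_int (d' nu) * schur ?m nu) \<and>
        (if mu \<in> ?P then d mu else 0) = (if mu \<in> ?P then d' mu else 0)"
      using assms by blast
  next
    fix c assume "\<exists>d'. prod_list (map (schur ?m) ls) = (\<Sum>nu\<in>?P. of_int (d' nu) * schur ?m nu) \<and>
        c = (if mu \<in> ?P then d' mu else 0)"
    then obtain d' where d': "prod_list (map (schur ?m) ls) = (\<Sum>nu\<in>?P. of_int (d' nu) * schur ?m nu)"
      "c = (if mu \<in> ?P then d' mu else 0)" by blast
    show "c = (if mu \<in> ?P then d mu else 0)"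
    proof (cases "mu \<in> ?P")
      case True
      have z: "\<forall>b. (\<Sum>nu\<in>?P. (d' nu - d nu) * int (Kc ?m nu b)) = 0"
      proof
        fix b
        have "Poly_Mapping.lookup (\<Sum>nu\<in>?P. of_int (d' nu) * schur ?m nu) b
            = Poly_Mapping.lookup (\<Sum>nu\<in>?P. of_int (d nu) * schur ?m nu) b" using d'(1) assms by simp
        hence "(\<Sum>nu\<in>?P. d' nu * int (Kc ?m nu b)) = (\<Sum>nu\<in>?P. d nu * int (Kc ?m nu b))"
          by (simp only: lookup_exp)
        thus "(\<Sum>nu\<in>?P. (d' nu - d nu) * int (Kc ?m nu b)) = 0"
          by (simp add: left_diff_distrib sum_subtractf)
      qed
      have "d' mu - d mu = 0"
        by (rule uniq[OF finite_partitions _ z True part_len[OF True]]) (simp add: partitions_of_def)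
      thus ?thesis using d'(2) True by simp
    next
      case False
      thus ?thesis using d'(2) by simp
    qed
  qed
qed

lemma LR_reduce:
  assumes parts: "\<forall>l\<in>set ls. is_partition l"
    and e: "\<forall>b. int (Qc n ls b) = (\<Sum>nu\<in>partitions_of (sum_list (map sum_list ls)). e nu * int (Kc n nu b))"
    and mu: "mu \<in> partitions_of (sum_list (map sum_list ls))" "length mu \<le> n"
  shows "LR_coeff ls mu = e mu"
proof -
  let ?m = "sum_list (map sum_list ls)"
  let ?P = "partitions_of ?m"
  have h1: "\<forall>b. int (Qc ?m ls b) \<noteq> 0 \<longrightarrow> b \<in> Mon ?m ?m" using Qc_Mon by simp
  have h2: "\<forall>k b. Suc k < ?m \<longrightarrow> int (Qc ?m ls (swp k b)) = int (Qc ?m ls b)"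
    using Qc_swp[OF parts] by simp
  obtain d where d: "\<forall>nu. d nu \<noteq> 0 \<longrightarrow> nu \<in> ?P \<and> length nu \<le> ?m"
    "\<forall>b. int (Qc ?m ls b) = (\<Sum>nu\<in>?P. d nu * int (Kc ?m nu b))"
    using expand[OF h1 h2] by blast
  have "prod_list (map (schur ?m) ls) = (\<Sum>nu\<in>?P. of_int (d nu) * schur ?m nu)"
    by (rule poly_mapping_eqI) (simp add: lookup_prod lookup_exp d(2)[rule_format, symmetric])
  hence LR: "LR_coeff ls mu = d mu" using LR_char mu(1) by simp
  let ?p = "min n ?m"
  have z: "\<forall>b. (\<Sum>nu\<in>?P. (d nu - e nu) * int (Kc ?p nu b)) = 0"
  proof
    fix b
    show "(\<Sum>nu\<in>?P. (d nu - e nu) * int (Kc ?p nu b)) = 0"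
    proof (cases "\<forall>t. ?p \<le> t \<longrightarrow> Poly_Mapping.lookup b t = 0")
      case True
      have k1: "Kc ?m nu b = Kc ?p nu b" for nu using Kc_restrict[of ?p ?m b nu] True by simp
      have k2: "Kc n nu b = Kc ?p nu b" for nu using Kc_restrict[of ?p n b nu] True by simp
      have q: "Qc ?m ls b = Qc n ls b" using Qc_restrict[of ?p ?m b ls] Qc_restrict[of ?p n b ls] True by simp
      have "(\<Sum>nu\<in>?P. d nu * int (Kc ?p nu b)) = int (Qc ?m ls b)" using d(2) k1 by simp
      also have "\<dots> = (\<Sum>nu\<in>?P. e nu * int (Kc ?p nu b))" using e q k2 by simp
      finally show ?thesis by (simp add: left_diff_distrib sum_subtractf)
    next
      case False
      then obtain t where t: "?p \<le> t" "Poly_Mapping.lookup b t \<noteq> 0" by auto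
      have "Kc ?p nu b = 0" for nu
      proof (rule ccontr)
        assume "Kc ?p nu b \<noteq> 0"
        hence "b \<in> Mon ?p (sum_list nu)" by (rule Kc_Mon)
        thus False using t unfolding Mon_def by auto
      qed
      thus ?thesis by simp
    qed
  qed
  have "length mu \<le> ?p" using mu part_len[OF mu(1)] by simp
  hence "d mu - e mu = 0"
    by (intro uniq[OF finite_partitions _ z mu(1)]) (simp add: partitions_of_def)
  thus ?thesis using LR by simp
qed



lemma pn_rect: "pn (rect a b) i = (if i < b \<and> 0 < a then a else 0)"
  by (auto simp: pn_def rect_def)

lemma rect_partition: "is_partition (rect a b)"
  unfolding is_partition_def rect_def by (auto simp: sorted_wrt_iff_nth_less)

lemma sum_rect: "sum_list (rect a b) = a * b"
  by (simp add: rect_def sum_list_replicate)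

lemma length_rect: "length (rect a b) \<le> b"
  by (simp add: rect_def)

lemma rect_P: "rect a b \<in> partitions_of (a * b)"
  using rect_partition sum_rect by (simp add: partitions_of_def)

lemma cpl_rect:
  assumes "0 < N" "L \<le> N"
  shows "cpl N N (rect N L) (rect N (N - L))"
proof
  show "is_partition (rect N L)" "is_partition (rect N (N - L))" by (rule rect_partition)+
  show "length (rect N L) \<le> N" using length_rect[of N L] assms by simp
  show "pn (rect N L) 0 \<le> N" by (simp add: pn_rect)
  fix i
  show "pn (rect N (N - L)) i = (if i < N then N - pn (rect N L) (N - 1 - i) else 0)"
    using assms by (simp add: pn_rect) arith
qed

section \<open>Complement of a partition in a box\<close>

definition compl :: "nat \<Rightarrow> nat \<Rightarrow> nat list \<Rightarrow> nat list" where
  "compl a N nu = filter ((<) 0) (map (\<lambda>i. a - pn nu (N - 1 - i)) [0..<N])"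

definition box :: "nat \<Rightarrow> nat \<Rightarrow> nat list set" where
  "box a N = {nu. is_partition nu \<and> length nu \<le> N \<and> pn nu 0 \<le> a}"

context
  fixes a N :: nat and nu :: "nat list"
  assumes nb: "nu \<in> box a N"
begin

lemma nb_p: "is_partition nu" and nb_l: "length nu \<le> N" and nb_a: "pn nu 0 \<le> a"
  using nb by (auto simp: box_def)

lemma compl_sorted: "sorted_wrt (\<ge>) (map (\<lambda>i. a - pn nu (N - 1 - i)) [0..<N])"
proof -
  have key: "a - pn nu (N - 1 - j) \<le> a - pn nu (N - 1 - i)" if ij: "i < j" "j < N" for i j
  proof -
    have "pn nu (N - 1 - i) \<le> pn nu (N - 1 - j)" using pn_mono[OF nb_p, of "N - 1 - j" "N - 1 - i"] ij by simp
    thus ?thesis by simp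
  qed
  show ?thesis unfolding sorted_wrt_iff_nth_less using key by simp
qed

lemma pn_compl: "pn (compl a N nu) i = (if i < N then a - pn nu (N - 1 - i) else 0)"
  unfolding compl_def using pn_filter[OF compl_sorted, of i] by simp

lemma compl_cpl: "cpl N a nu (compl a N nu)"
proof
  show "is_partition nu" by (rule nb_p)
  show "is_partition (compl a N nu)" unfolding compl_def by (rule partition_filter[OF compl_sorted])
  show "length nu \<le> N" by (rule nb_l)
  show "pn nu 0 \<le> a" by (rule nb_a)
  fix i show "pn (compl a N nu) i = (if i < N then a - pn nu (N - 1 - i) else 0)" by (rule pn_compl)
qed

lemma compl_box: "compl a N nu \<in> box a N"
proof -
  interpret cpl N a nu "compl a N nu" by (rule compl_cpl)
  show ?thesis unfolding box_def using pka length_ka pn_ka_le by simp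
qed

lemma sum_compl: "sum_list (compl a N nu) = N * a - sum_list nu"
proof -
  have "sum_list (compl a N nu) = sum_list (map (\<lambda>i. a - pn nu (N - 1 - i)) [0..<N])"
    by (simp add: compl_def sum_list_filter_pos)
  also have "\<dots> = (\<Sum>i<N. a - pn nu (N - 1 - i))"
    by (simp add: sum_set_upt_conv_sum_list_nat[symmetric] atLeast0LessThan)
  also have "\<dots> = (\<Sum>i<N. a - pn nu i)"
    using sum.nat_diff_reindex[of "\<lambda>i. a - pn nu i" N] by simp
  also have "\<dots> = N * a - (\<Sum>i<N. pn nu i)"
  proof -
    have le: "pn nu i \<le> a" for i using pn_mono[OF nb_p, of 0 i] nb_a by simp
    have "(\<Sum>i<N. a - pn nu i) + (\<Sum>i<N. pn nu i) = (\<Sum>i<N. a)"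
      by (simp add: sum.distrib[symmetric] le)
    thus ?thesis by simp
  qed
  also have "(\<Sum>i<N. pn nu i) = sum_list nu" using sum_list_pn[OF nb_l] by simp
  finally show ?thesis .
qed

end

lemma compl_compl: assumes nb: "nu \<in> box a N" shows "compl a N (compl a N nu) = nu"
proof -
  interpret A: cpl N a nu "compl a N nu" by (rule compl_cpl[OF nb])
  interpret B: cpl N a "compl a N nu" nu by (rule A.sym)
  have cb: "compl a N nu \<in> box a N" by (rule compl_box[OF nb])
  show ?thesis
  proof (rule part_eq)
    show "is_partition (compl a N (compl a N nu))" using compl_box[OF cb] by (simp add: box_def)
    show "is_partition nu" using nb by (simp add: box_def)
    fix i
    show "pn (compl a N (compl a N nu)) i = pn nu i"
      using pn_compl[OF cb] B.rel[of i] by simp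
  qed
qed

lemma compl_bij:
  assumes "m \<le> N * a"
  shows "bij_betw (compl a N) (partitions_of m \<inter> box a N) (partitions_of (N * a - m) \<inter> box a N)"
proof (rule bij_betw_byWitness[where f' = "compl a N"])
  show "\<forall>x\<in>partitions_of m \<inter> box a N. compl a N (compl a N x) = x" using compl_compl by blast
  show "\<forall>x\<in>partitions_of (N * a - m) \<inter> box a N. compl a N (compl a N x) = x" using compl_compl by blast
  show "compl a N ` (partitions_of m \<inter> box a N) \<subseteq> partitions_of (N * a - m) \<inter> box a N"
  proof
    fix y assume "y \<in> compl a N ` (partitions_of m \<inter> box a N)"
    then obtain x where x: "x \<in> partitions_of m" "x \<in> box a N" "y = compl a N x" by auto
    have "y \<in> box a N" using compl_box[OF x(2)] x(3) by simp
    moreover have "sum_list y = N * a - m" using sum_compl[OF x(2)] x by (simp add: partitions_of_def)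
    ultimately show "y \<in> partitions_of (N * a - m) \<inter> box a N" by (simp add: partitions_of_def box_def)
  qed
  show "compl a N ` (partitions_of (N * a - m) \<inter> box a N) \<subseteq> partitions_of m \<inter> box a N"
  proof
    fix y assume "y \<in> compl a N ` (partitions_of (N * a - m) \<inter> box a N)"
    then obtain x where x: "x \<in> partitions_of (N * a - m)" "x \<in> box a N" "y = compl a N x" by auto
    have "y \<in> box a N" using compl_box[OF x(2)] x(3) by simp
    moreover have "sum_list y = m" using sum_compl[OF x(2)] x assms by (simp add: partitions_of_def)
    ultimately show "y \<in> partitions_of m \<inter> box a N" by (simp add: partitions_of_def box_def)
  qed
qed

lemma wt_le_width:
  assumes T: "T \<in> SSYT n lam" and p: "is_partition lam"
  shows "Poly_Mapping.lookup (wt lam T) t \<le> pn lam 0"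
proof -
  have "Poly_Mapping.lookup (wt lam T) t = card {j. t \<in> colset lam T j}"
    by (simp add: lookup_wt count_by_cols[OF T p])
  also have "\<dots> \<le> card {..<pn lam 0}"
  proof (rule card_mono)
    show "{j. t \<in> colset lam T j} \<subseteq> {..<pn lam 0}"
    proof
      fix j assume "j \<in> {j. t \<in> colset lam T j}"
      then obtain i where "i < colh lam j" by (auto simp: colset_def)
      hence "(0, j) \<in> cells lam" using cells_colh[OF p, of 0 j] by simp
      thus "j \<in> {..<pn lam 0}" by (simp add: cells_pn)
    qed
  qed simp
  finally show ?thesis by simp
qed

lemma tw_le_width:
  "\<forall>l\<in>set ls. is_partition l \<Longrightarrow> Ts \<in> tup n ls \<Longrightarrow> Poly_Mapping.lookup (tw ls Ts) t \<le> sum_list (map (\<lambda>l. pn l 0) ls)"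
proof (induction ls arbitrary: Ts)
  case Nil
  then show ?case by simp
next
  case (Cons l ls)
  from Cons.prems(2) obtain T Ts' where Ts: "Ts = T # Ts'" and T: "T \<in> SSYT n l" and Ts': "Ts' \<in> tup n ls"
    by auto
  have "Poly_Mapping.lookup (wt l T) t \<le> pn l 0" using wt_le_width[OF T] Cons.prems(1) by simp
  moreover have "Poly_Mapping.lookup (tw ls Ts') t \<le> sum_list (map (\<lambda>l. pn l 0) ls)"
    using Cons.IH[OF _ Ts'] Cons.prems(1) by simp
  ultimately show ?case using Ts by (simp add: lookup_add)
qed

lemma lexless_first: "lexless p f g \<Longrightarrow> f 0 \<le> g 0"
  unfolding lexless_def by (metis le_eq_less_or_eq neq0_conv order_refl)

lemma expansion_box:
  assumes parts: "\<forall>l\<in>set ls. is_partition l" and Np: "0 < n"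
    and es: "\<forall>nu. e nu \<noteq> 0 \<longrightarrow> nu \<in> partitions_of m \<and> length nu \<le> n"
    and e: "\<forall>b. int (Qc n ls b) = (\<Sum>nu\<in>partitions_of m. e nu * int (Kc n nu b))"
    and wid: "sum_list (map (\<lambda>l. pn l 0) ls) \<le> a"
  shows "e nu \<noteq> 0 \<Longrightarrow> pn nu 0 \<le> a"
proof -
  assume enu: "e nu \<noteq> 0"
  let ?S = "{nu\<in>partitions_of m. length nu \<le> n}"
  let ?Z = "{nu\<in>?S. e nu \<noteq> 0}"
  have finZ: "finite ?Z" using finite_partitions by simp
  have neZ: "?Z \<noteq> {}" using enu es by auto
  have injZ: "\<forall>x\<in>?Z. \<forall>y\<in>?Z. (\<forall>t<n. pn x t = pn y t) \<longrightarrow> x = y"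
  proof (intro ballI impI)
    fix x y assume x: "x \<in> ?Z" and y: "y \<in> ?Z" and eq: "\<forall>t<n. pn x t = pn y t"
    have "pn x t = pn y t" for t
    proof (cases "t < n")
      case False
      thus ?thesis using x y by (simp add: pn_def)
    qed (use eq in simp)
    thus "x = y" using part_eq x y by (auto simp: partitions_of_def)
  qed
  obtain nu0 where nu0: "nu0 \<in> ?Z" "\<forall>y\<in>?Z. y = nu0 \<or> lexless n (pn y) (pn nu0)"
    using ex_lexmax[OF finZ neZ injZ] by blast
  have "int (Qc n ls (mon nu0)) = (\<Sum>nu\<in>partitions_of m. e nu * int (Kc n nu (mon nu0)))" using e by simp
  also have "\<dots> = (\<Sum>nu\<in>?S. e nu * int (Kc n nu (mon nu0)))"
    by (rule sum.mono_neutral_right[OF finite_partitions]) (use es in auto)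
  also have "\<dots> = e nu0"
  proof (rule eval_max)
    show "finite ?S" by (rule finite_subset[OF _ finite_partitions]) auto
  qed (use nu0 in \<open>auto simp: partitions_of_def\<close>)
  finally have "Qc n ls (mon nu0) \<noteq> 0" using nu0 by auto
  hence "{Ts\<in>tup n ls. tw ls Ts = mon nu0} \<noteq> {}" unfolding Qc_def by (intro notI) simp
  then obtain Ts where Ts: "Ts \<in> tup n ls" "tw ls Ts = mon nu0" by blast
  have "pn nu0 0 \<le> a" using tw_le_width[OF parts Ts(1), of 0] Ts(2) wid by (simp add: lookup_mon)
  moreover have "nu \<in> ?Z" using enu es by auto
  hence "nu = nu0 \<or> lexless n (pn nu) (pn nu0)" using nu0 by blast
  hence "pn nu 0 \<le> pn nu0 0" using lexless_first by auto
  ultimately show ?thesis by simp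
qed



lemma dual_expansion:
  assumes la: "list_all2 (cpl N N) ls ks" and aa: "a = N * length ls"
    and es: "\<forall>nu. e nu \<noteq> 0 \<longrightarrow> nu \<in> partitions_of m \<and> nu \<in> box a N"
    and e: "\<forall>b. int (Qc N ls b) = (\<Sum>nu\<in>partitions_of m. e nu * int (Kc N nu b))"
    and mle: "m \<le> N * a"
  shows "int (Qc N ks g) = (\<Sum>ka\<in>partitions_of (N * a - m). (if ka \<in> box a N then e (compl a N ka) else 0) * int (Kc N ka g))"
proof -
  let ?P = "partitions_of m" and ?P' = "partitions_of (N * a - m)"
  have Q: "Qc N ks g = card {Ts\<in>tup N ls. tw ls Ts + g = aN N a}"
    using tup_cpl[OF la, of g] aa by simp
  have K: "Kc N ka g = card {T\<in>SSYT N (compl a N ka). wt (compl a N ka) T + g = aN N a}" if kb: "ka \<in> box a N" for ka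
  proof -
    interpret A: cpl N a ka "compl a N ka" by (rule compl_cpl[OF kb])
    show ?thesis by (rule cpl_count[OF A.sym])
  qed
  have rhs1: "(\<Sum>ka\<in>?P'. (if ka \<in> box a N then e (compl a N ka) else 0) * int (Kc N ka g))
      = (\<Sum>ka\<in>?P' \<inter> box a N. e (compl a N ka) * int (Kc N ka g))"
  proof -
    have "(\<Sum>ka\<in>?P'. (if ka \<in> box a N then e (compl a N ka) else 0) * int (Kc N ka g))
        = (\<Sum>ka\<in>?P'. (if ka \<in> box a N then e (compl a N ka) * int (Kc N ka g) else 0))"
      by (rule sum.cong) auto
    also have "\<dots> = (\<Sum>ka\<in>{ka\<in>?P'. ka \<in> box a N}. e (compl a N ka) * int (Kc N ka g))"
      by (rule sum.inter_filter[symmetric]) (rule finite_partitions)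
    also have "{ka\<in>?P'. ka \<in> box a N} = ?P' \<inter> box a N" by auto
    finally show ?thesis .
  qed
  show ?thesis
  proof (cases "\<exists>b. b + g = aN N a")
    case True
    then obtain b where b: "b + g = aN N a" by blast
    have "{Ts\<in>tup N ls. tw ls Ts + g = aN N a} = {Ts\<in>tup N ls. tw ls Ts = b}"
      by (simp add: b[symmetric])
    hence Qb: "Qc N ks g = Qc N ls b" using Q by (simp add: Qc_def)
    have Kb: "Kc N ka g = Kc N (compl a N ka) b" if kb: "ka \<in> box a N" for ka
    proof -
      have "{T\<in>SSYT N (compl a N ka). wt (compl a N ka) T + g = aN N a} = {T\<in>SSYT N (compl a N ka). wt (compl a N ka) T = b}"
        by (simp add: b[symmetric])
      thus ?thesis using K[OF kb] by (simp add: Kc_def)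
    qed
    have "(\<Sum>ka\<in>?P' \<inter> box a N. e (compl a N ka) * int (Kc N ka g))
        = (\<Sum>ka\<in>?P' \<inter> box a N. e (compl a N ka) * int (Kc N (compl a N ka) b))"
      by (rule sum.cong) (auto simp: Kb)
    also have "\<dots> = (\<Sum>nu\<in>?P \<inter> box a N. e (compl a N (compl a N nu)) * int (Kc N (compl a N (compl a N nu)) b))"
      by (rule sum.reindex_bij_betw[OF compl_bij[OF mle], symmetric])
    also have "\<dots> = (\<Sum>nu\<in>?P \<inter> box a N. e nu * int (Kc N nu b))"
      by (rule sum.cong) (auto simp: compl_compl)
    also have "\<dots> = (\<Sum>nu\<in>?P. e nu * int (Kc N nu b))"
      by (rule sum.mono_neutral_left[OF finite_partitions]) (use es in auto)
    also have "\<dots> = int (Qc N ks g)" using e Qb by simp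
    finally show ?thesis using rhs1 by simp
  next
    case False
    have "{Ts\<in>tup N ls. tw ls Ts + g = aN N a} = {}" using False by blast
    hence "Qc N ks g = 0" using Q by simp
    moreover have "Kc N ka g = 0" if "ka \<in> box a N" for ka
    proof -
      have "{T\<in>SSYT N (compl a N ka). wt (compl a N ka) T + g = aN N a} = {}" using False by blast
      thus ?thesis using K[OF that] by simp
    qed
    ultimately show ?thesis using rhs1 by simp
  qed
qed

theorem theorem6p2:
  fixes N K M :: nat and L :: "nat \<Rightarrow> nat"
  assumes "0 < N"
    and "\<And>i j. 1 \<le> i \<Longrightarrow> i \<le> j \<Longrightarrow> j \<le> K \<Longrightarrow> L j \<le> L i"
    and "1 \<le> K \<Longrightarrow> L 1 \<le> N"
    and "M = (\<Sum>i=1..K. L i)"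
  shows "LR_coeff (map (\<lambda>i. rect N (L i)) [1..<K+1]) (rect M N)
       = LR_coeff (map (\<lambda>i. rect N (N - L i)) [1..<K+1]) (rect (K * N - M) N)"
proof -
  note Np = assms(1)
  have LN: "L i \<le> N" if "1 \<le> i" "i \<le> K" for i
  proof -
    have "L i \<le> L 1" using assms(2)[of 1 i] that by simp
    also have "L 1 \<le> N" using assms(3) that by simp
    finally show ?thesis .
  qed
  define ls where "ls = map (\<lambda>i. rect N (L i)) [1..<K+1]"
  define ks where "ks = map (\<lambda>i. rect N (N - L i)) [1..<K+1]"
  define a where "a = N * K"
  have lenls: "length ls = K" by (simp add: ls_def)
  have parts: "\<forall>l\<in>set ls. is_partition l" by (auto simp: ls_def rect_partition)
  have partsk: "\<forall>l\<in>set ks. is_partition l" by (auto simp: ks_def rect_partition)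
  have MK: "M \<le> K * N"
  proof -
    have "M \<le> (\<Sum>i=1..K. N)" unfolding assms(4) by (rule sum_mono) (simp add: LN)
    thus ?thesis by simp
  qed
  have m: "sum_list (map sum_list ls) = N * M"
  proof -
    have "sum_list (map sum_list ls) = (\<Sum>i\<in>{1..<K+1}. N * L i)"
      by (simp add: ls_def sum_rect comp_def sum_set_upt_conv_sum_list_nat[symmetric])
    also have "\<dots> = N * M" using assms(4) by (simp add: sum_distrib_left atLeastLessThanSuc_atLeastAtMost)
    finally show ?thesis .
  qed
  have m': "sum_list (map sum_list ks) = N * a - N * M"
  proof -
    have "sum_list (map sum_list ks) = (\<Sum>i\<in>{1..<K+1}. N * (N - L i))"
      by (simp add: ks_def sum_rect comp_def sum_set_upt_conv_sum_list_nat[symmetric])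
    also have "\<dots> = N * (\<Sum>i=1..K. N - L i)" by (simp add: sum_distrib_left atLeastLessThanSuc_atLeastAtMost)
    also have "(\<Sum>i=1..K. N - L i) = K * N - M"
    proof -
      have "(\<Sum>i=1..K. N - L i) + (\<Sum>i=1..K. L i) = (\<Sum>i=1..K. N)"
        by (simp add: sum.distrib[symmetric] LN)
      thus ?thesis using assms(4) by simp
    qed
    finally show ?thesis by (simp add: a_def diff_mult_distrib2 mult.commute)
  qed
  have la: "list_all2 (cpl N N) ls ks"
    unfolding ls_def ks_def list_all2_map1 list_all2_map2 list_all2_same
    by (auto intro!: cpl_rect[OF Np] LN)
  obtain e where es: "\<forall>nu. e nu \<noteq> 0 \<longrightarrow> nu \<in> partitions_of (N * M) \<and> length nu \<le> N"
    and e: "\<forall>b. int (Qc N ls b) = (\<Sum>nu\<in>partitions_of (N * M). e nu * int (Kc N nu b))"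
  proof -
    have h1: "\<forall>b. int (Qc N ls b) \<noteq> 0 \<longrightarrow> b \<in> Mon N (N * M)" using Qc_Mon[of N ls] m by simp
    have h2: "\<forall>k b. Suc k < N \<longrightarrow> int (Qc N ls (swp k b)) = int (Qc N ls b)" using Qc_swp[OF parts] by simp
    show ?thesis using expand[OF h1 h2] that by blast
  qed
  have wid: "sum_list (map (\<lambda>l. pn l 0) ls) \<le> a"
  proof -
    have "sum_list (map (\<lambda>l. pn l 0) ls) = (\<Sum>i\<in>{1..<K+1}. pn (rect N (L i)) 0)"
      by (simp add: ls_def comp_def sum_set_upt_conv_sum_list_nat[symmetric])
    also have "\<dots> \<le> (\<Sum>i\<in>{1..<K+1}. N)" by (rule sum_mono) (simp add: pn_rect)
    finally show ?thesis by (simp add: a_def mult.commute)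
  qed
  have ebox: "e nu \<noteq> 0 \<Longrightarrow> pn nu 0 \<le> a" for nu
    by (rule expansion_box[OF parts Np es e wid])
  have es2: "\<forall>nu. e nu \<noteq> 0 \<longrightarrow> nu \<in> partitions_of (N * M) \<and> nu \<in> box a N"
    using es ebox by (auto simp: box_def partitions_of_def)
  have mle: "N * M \<le> N * a" using MK by (simp add: a_def mult.commute)
  have dual: "\<forall>g. int (Qc N ks g) = (\<Sum>ka\<in>partitions_of (sum_list (map sum_list ks)).
      (if ka \<in> box a N then e (compl a N ka) else 0) * int (Kc N ka g))"
    using dual_expansion[OF la _ es2 e mle] lenls m' by (simp add: a_def)
  have lhs: "LR_coeff ls (rect M N) = e (rect M N)"
  proof (rule LR_reduce[OF parts])
    show "\<forall>b. int (Qc N ls b) = (\<Sum>nu\<in>partitions_of (sum_list (map sum_list ls)). e nu * int (Kc N nu b))"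
      using e m by simp
    show "rect M N \<in> partitions_of (sum_list (map sum_list ls))" using rect_P[of M N] m by (simp add: mult.commute)
    show "length (rect M N) \<le> N" by (rule length_rect)
  qed
  have rhs: "LR_coeff ks (rect (K * N - M) N) = (if rect (K * N - M) N \<in> box a N then e (compl a N (rect (K * N - M) N)) else 0)"
  proof (rule LR_reduce[OF partsk dual])
    show "rect (K * N - M) N \<in> partitions_of (sum_list (map sum_list ks))"
      using rect_P[of "K * N - M" N] m' by (simp add: a_def diff_mult_distrib2 mult.commute)
    show "length (rect (K * N - M) N) \<le> N" by (rule length_rect)
  qed
  have rb: "rect (K * N - M) N \<in> box a N"
    unfolding box_def using rect_partition length_rect by (simp add: pn_rect a_def mult.commute)
  have cr: "compl a N (rect (K * N - M) N) = rect M N"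
  proof (rule part_eq)
    show "is_partition (compl a N (rect (K * N - M) N))" using compl_box[OF rb] by (simp add: box_def)
    show "is_partition (rect M N)" by (rule rect_partition)
    fix i
    show "pn (compl a N (rect (K * N - M) N)) i = pn (rect M N) i"
      using pn_compl[OF rb, of i] MK by (simp add: pn_rect a_def mult.commute)
  qed
  show ?thesis using lhs rhs rb cr by (simp add: ls_def ks_def)
qed



end
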